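(* For circuits $f,g:a\to b$, we have $[\![f]\!]=[\![g]\!]$ in $\mathbf{Poly}_{\mathbb{Z}_2}$ if and only if $f$ and $g$ are equal modulo $A$ (i.e. related by the smallest congruence for composition and tensor containing the equations $A$).
   Context: A circuit is a morphism of the free symmetric strict monoidal category whose objects are natural numbers (tensor = addition) generated by $\mathsf{discard}:1\to 0$, $\mathsf{copy}:1\to 2$, $\mathsf{zero}:0\to1$, $\mathsf{add}:2\to1$, $\mathsf{one}:0\to 1$, $\mathsf{and}:2\to 1$. Composition is diagrammatic ($f;g$ = first $f$ then $g$), $\sigma$ is the symmetry $2\to2$, and $\mathsf{copy}_n$, $\mathsf{discard}_n$ are the evident composites. $A$ is the set of equations: $\mathsf{copy};\sigma=\mathsf{copy}$; $\mathsf{copy};(\mathsf{copy}\otimes \mathrm{id}_1)=\mathsf{copy};(\mathrm{id}_1\otimes\mathsf{copy})$; $\mathsf{copy};(\mathsf{discard}\otimes\mathrm{id}_1)=\mathrm{id}_1$; for every circuit $f:a\to b$, $f;\mathsf{copy}_b=\mathsf{copy}_a;(f\otimes f)$ and $f;\mathsf{discard}_b=\mathsf{discard}_a$; commutativity, associativity and unit laws for $(\mathsf{add},\mathsf{zero})$ and for $(\mathsf{and},\mathsf{one})$ (e.g. $\sigma;\mathsf{add}=\mathsf{add}$, $(\mathsf{add}\otimes\mathrm{id}_1);\mathsf{add}=(\mathrm{id}_1\otimes\mathsf{add});\mathsf{add}$, $(\mathsf{zero}\otimes\mathrm{id}_1);\mathsf{add}=\mathrm{id}_1$); $\mathsf{copy};\mathsf{add}=\mathsf{discard};\mathsf{zero}$;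 and distributivity $(\mathrm{id}_1\otimes\mathsf{add});\mathsf{and}=(\mathsf{copy}\otimes\mathrm{id}_2);(\mathrm{id}_1\otimes\sigma\otimes\mathrm{id}_1);(\mathsf{and}\otimes\mathsf{and});\mathsf{add}$. (Notably $A$ does not contain $\mathsf{copy};\mathsf{and}=\mathrm{id}_1$.) $\mathbf{Poly}_{\mathbb{Z}_2}$ has natural numbers as objects and $b$-tuples of polynomials in $\mathbb{Z}_2[x_1,\dots,x_a]$ as morphisms $a\to b$, composed by substitution. $[\![\cdot]\!]$ is the strict symmetric monoidal identity-on-objects interpretation sending $\mathsf{discard}\mapsto\langle\rangle$, $\mathsf{copy}\mapsto\langle x_1,x_1\rangle$, $\mathsf{zero}\mapsto\langle0\rangle$, $\mathsf{add}\mapsto\langle x_1+x_2\rangle$, $\mathsf{one}\mapsto\langle1\rangle$, $\mathsf{and}\mapsto\langle x_1x_2\rangle$. *)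

theory Defs
  imports Main "HOL-Library.Poly_Mapping" "HOL-Library.Z2"
begin

section \<open>Polynomials over Z2 in variables x_1, x_2, ... (variable x_(i+1) has index i)\<close>

text \<open>A monomial is a finitely supported exponent map nat \<Rightarrow>0 nat; a polynomial is a
finitely supported coefficient map from monomials to Z2 (type bit). Multiplication is
the convolution product of HOL-Library.Poly_Mapping, making this the polynomial ring.\<close>

type_synonym mpoly = "(nat \<Rightarrow>\<^sub>0 nat) \<Rightarrow>\<^sub>0 bit"

definition PVar :: "nat \<Rightarrow> mpoly" where
  "PVar i = Poly_Mapping.single (Poly_Mapping.single i 1) 1"

definition PConst :: "bit \<Rightarrow> mpoly" where
  "PConst c = Poly_Mapping.single 0 c"

definition mon_subst :: "(nat \<Rightarrow> mpoly) \<Rightarrow> (nat \<Rightarrow>\<^sub>0 nat) \<Rightarrow> mpoly" where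
  "mon_subst s mo = (\<Prod>i\<in>Poly_Mapping.keys mo. s i ^ Poly_Mapping.lookup mo i)"

definition psubst :: "(nat \<Rightarrow> mpoly) \<Rightarrow> mpoly \<Rightarrow> mpoly" where
  "psubst s p = (\<Sum>mo\<in>Poly_Mapping.keys p. PConst (Poly_Mapping.lookup p mo) * mon_subst s mo)"

datatype gen = Discard | Copy | Zero | Add | One | And

datatype circ =
    G gen
  | Id nat
  | Sw nat nat
  | Comp circ circ     \<comment> \<open>diagrammatic: Comp f g = f ; g\<close>
  | Tensor circ circ

fun gdom :: "gen \<Rightarrow> nat" where
  "gdom Discard = 1" | "gdom Copy = 1" | "gdom Zero = 0"
| "gdom Add = 2" | "gdom One = 0" | "gdom And = 2"

fun gcod :: "gen \<Rightarrow> nat" where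
  "gcod Discard = 0" | "gcod Copy = 2" | "gcod Zero = 1"
| "gcod Add = 1" | "gcod One = 1" | "gcod And = 1"

fun dom :: "circ \<Rightarrow> nat" where
  "dom (G x) = gdom x"
| "dom (Id n) = n"
| "dom (Sw a b) = a + b"
| "dom (Comp f g) = dom f"
| "dom (Tensor f g) = dom f + dom g"

fun cod :: "circ \<Rightarrow> nat" where
  "cod (G x) = gcod x"
| "cod (Id n) = n"
| "cod (Sw a b) = b + a"
| "cod (Comp f g) = cod g"
| "cod (Tensor f g) = cod f + cod g"

fun wt :: "circ \<Rightarrow> bool" where
  "wt (G x) = True"
| "wt (Id n) = True"
| "wt (Sw a b) = True"
| "wt (Comp f g) = (wt f \<and> wt g \<and> cod f = dom g)"
| "wt (Tensor f g) = (wt f \<and> wt g)"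

abbreviation sigma :: circ where "sigma \<equiv> Sw 1 1"

fun discard_n :: "nat \<Rightarrow> circ" where
  "discard_n 0 = Id 0"
| "discard_n (Suc n) = Tensor (G Discard) (discard_n n)"

text \<open>copy_n : n \<rightarrow> 2n, (x_1..x_n) \<mapsto> (x_1..x_n,x_1..x_n).\<close>
fun copy_n :: "nat \<Rightarrow> circ" where
  "copy_n 0 = Id 0"
| "copy_n (Suc n) = Comp (Tensor (G Copy) (copy_n n))
                         (Tensor (Tensor (Id 1) (Sw 1 n)) (Id n))"

text \<open>The smallest congruence (for composition and tensor) on well-typed circuit terms
containing the axioms of symmetric strict monoidal categories (so that its classes are
morphisms of the free SSMC) together with the equations A.\<close>

inductive eqA :: "circ \<Rightarrow> circ \<Rightarrow> bool" where
  refl: "wt f \<Longrightarrow> eqA f f"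
| sym: "eqA f g \<Longrightarrow> eqA g f"
| trans: "eqA f g \<Longrightarrow> eqA g h \<Longrightarrow> eqA f h"
| comp_cong: "eqA f f' \<Longrightarrow> eqA g g' \<Longrightarrow> cod f = dom g \<Longrightarrow> eqA (Comp f g) (Comp f' g')"
| tensor_cong: "eqA f f' \<Longrightarrow> eqA g g' \<Longrightarrow> eqA (Tensor f g) (Tensor f' g')"
| id_left: "wt f \<Longrightarrow> eqA (Comp (Id (dom f)) f) f"
| id_right: "wt f \<Longrightarrow> eqA (Comp f (Id (cod f))) f"
| comp_assoc: "wt f \<Longrightarrow> wt g \<Longrightarrow> wt h \<Longrightarrow> cod f = dom g \<Longrightarrow> cod g = dom h \<Longrightarrow>
    eqA (Comp (Comp f g) h) (Comp f (Comp g h))"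
| tensor_assoc: "wt f \<Longrightarrow> wt g \<Longrightarrow> wt h \<Longrightarrow>
    eqA (Tensor (Tensor f g) h) (Tensor f (Tensor g h))"
| tensor_unit_left: "wt f \<Longrightarrow> eqA (Tensor (Id 0) f) f"
| tensor_unit_right: "wt f \<Longrightarrow> eqA (Tensor f (Id 0)) f"
| tensor_id: "eqA (Tensor (Id m) (Id n)) (Id (m + n))"
| interchange: "wt f \<Longrightarrow> wt g \<Longrightarrow> wt h \<Longrightarrow> wt k \<Longrightarrow> cod f = dom h \<Longrightarrow> cod g = dom k \<Longrightarrow>
    eqA (Comp (Tensor f g) (Tensor h k)) (Tensor (Comp f h) (Comp g k))"
| sw_inv: "eqA (Comp (Sw a b) (Sw b a)) (Id (a + b))"
| sw_zero_right: "eqA (Sw a 0) (Id a)"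
| sw_zero_left: "eqA (Sw 0 a) (Id a)"
| sw_hex_left: "eqA (Sw (a + b) c) (Comp (Tensor (Id a) (Sw b c)) (Tensor (Sw a c) (Id b)))"
| sw_hex_right: "eqA (Sw a (b + c)) (Comp (Tensor (Sw a b) (Id c)) (Tensor (Id b) (Sw a c)))"
| sw_natural: "wt f \<Longrightarrow> wt g \<Longrightarrow>
    eqA (Comp (Tensor f g) (Sw (cod f) (cod g))) (Comp (Sw (dom f) (dom g)) (Tensor g f))"
  \<comment> \<open>the equations A\<close>
| copy_comm: "eqA (Comp (G Copy) sigma) (G Copy)"
| copy_assoc: "eqA (Comp (G Copy) (Tensor (G Copy) (Id 1))) (Comp (G Copy) (Tensor (Id 1) (G Copy)))"
| copy_unit: "eqA (Comp (G Copy) (Tensor (G Discard) (Id 1))) (Id 1)"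
| copy_natural: "wt f \<Longrightarrow> eqA (Comp f (copy_n (cod f))) (Comp (copy_n (dom f)) (Tensor f f))"
| discard_natural: "wt f \<Longrightarrow> eqA (Comp f (discard_n (cod f))) (discard_n (dom f))"
| add_comm: "eqA (Comp sigma (G Add)) (G Add)"
| add_assoc: "eqA (Comp (Tensor (G Add) (Id 1)) (G Add)) (Comp (Tensor (Id 1) (G Add)) (G Add))"
| add_unit_left: "eqA (Comp (Tensor (G Zero) (Id 1)) (G Add)) (Id 1)"
| add_unit_right: "eqA (Comp (Tensor (Id 1) (G Zero)) (G Add)) (Id 1)"
| and_comm: "eqA (Comp sigma (G And)) (G And)"
| and_assoc: "eqA (Comp (Tensor (G And) (Id 1)) (G And)) (Comp (Tensor (Id 1) (G And)) (G And))"
| and_unit_left: "eqA (Comp (Tensor (G One) (Id 1)) (G And)) (Id 1)"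
| and_unit_right: "eqA (Comp (Tensor (Id 1) (G One)) (G And)) (Id 1)"
| copy_add: "eqA (Comp (G Copy) (G Add)) (Comp (G Discard) (G Zero))"
| distrib: "eqA (Comp (Tensor (Id 1) (G Add)) (G And))
    (Comp (Comp (Comp (Tensor (G Copy) (Id 2)) (Tensor (Tensor (Id 1) sigma) (Id 1)))
                (Tensor (G And) (G And))) (G Add))"

text \<open>A morphism a \<rightarrow> b of Poly_Z2 is a b-tuple (list of length b) of polynomials in
the variables with indices < a; composition f;g substitutes the components of f into g.\<close>

fun ginterp :: "gen \<Rightarrow> mpoly list" where
  "ginterp Discard = []"
| "ginterp Copy = [PVar 0, PVar 0]"
| "ginterp Zero = [0]"
| "ginterp Add = [PVar 0 + PVar 1]"
| "ginterp One = [1]"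
| "ginterp And = [PVar 0 * PVar 1]"

fun interp :: "circ \<Rightarrow> mpoly list" where
  "interp (G x) = ginterp x"
| "interp (Id n) = map PVar [0..<n]"
| "interp (Sw a b) = map PVar ([a..<a + b] @ [0..<a])"
| "interp (Comp f g) = map (psubst (\<lambda>i. interp f ! i)) (interp g)"
| "interp (Tensor f g) = interp f @ map (psubst (\<lambda>i. PVar (i + dom f))) (interp g)"

end

theory Submission
  imports Defs
begin


section \<open>Generic evaluation of Z2 polynomials\<close>

class char2 = comm_ring_1 +
  assumes one_plus_one_char2: "1 + 1 = 0"

lemma char2_double [simp]: "(x::'a::char2) + x = 0"
proof -
  have "x + x = (1 + 1) * x" by (simp only: distrib_right mult_1_left)
  then show ?thesis by (simp only: one_plus_one_char2 mult_zero_left)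
qed

instance bit :: char2
  by standard (simp only: one_add_one bit_2_eq_0)

instance poly_mapping :: (comm_monoid_add, char2) char2
proof
  have "(1::'a \<Rightarrow>\<^sub>0 'b) + 1 = Poly_Mapping.single 0 (1 + 1)"
    by (simp only: single_add single_one)
  then show "(1::'a \<Rightarrow>\<^sub>0 'b) + 1 = 0"
    by (simp only: one_plus_one_char2 single_zero)
qed

lemma of_bit_add: "(of_bit (a + b) :: 'a::char2) = of_bit a + of_bit b"
  by (cases a; cases b) simp_all

lemma of_bit_mult: "(of_bit (a * b) :: 'a::comm_ring_1) = of_bit a * of_bit b"
  by (cases a; cases b) simp_all

definition vars :: "mpoly \<Rightarrow> nat set" where
  "vars p = \<Union> (Poly_Mapping.keys ` Poly_Mapping.keys p)"

definition mon :: "(nat \<Rightarrow> 'r::comm_ring_1) \<Rightarrow> (nat \<Rightarrow>\<^sub>0 nat) \<Rightarrow> 'r" where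
  "mon \<rho> m = (\<Prod>i\<in>Poly_Mapping.keys m. \<rho> i ^ Poly_Mapping.lookup m i)"

definition ev :: "(nat \<Rightarrow> 'r::comm_ring_1) \<Rightarrow> mpoly \<Rightarrow> 'r" where
  "ev \<rho> p = (\<Sum>m\<in>Poly_Mapping.keys p. of_bit (Poly_Mapping.lookup p m) * mon \<rho> m)"

lemma mon_superset:
  assumes "finite K" "Poly_Mapping.keys m \<subseteq> K"
  shows "mon \<rho> m = (\<Prod>i\<in>K. \<rho> i ^ Poly_Mapping.lookup m i)"
  unfolding mon_def
  by (rule prod.mono_neutral_left) (use assms in \<open>auto simp: in_keys_iff\<close>)

lemma ev_superset:
  assumes "finite K" "Poly_Mapping.keys p \<subseteq> K"
  shows "ev \<rho> p = (\<Sum>m\<in>K. of_bit (Poly_Mapping.lookup p m) * mon \<rho> m)"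
  unfolding ev_def
  by (rule sum.mono_neutral_left) (use assms in \<open>auto simp: in_keys_iff\<close>)

lemma mon_add: "mon \<rho> (m1 + m2) = mon \<rho> m1 * mon \<rho> m2"
proof -
  let ?K = "Poly_Mapping.keys m1 \<union> Poly_Mapping.keys m2"
  have f: "finite ?K" by simp
  have "mon \<rho> (m1 + m2) = (\<Prod>i\<in>?K. \<rho> i ^ Poly_Mapping.lookup (m1 + m2) i)"
    by (rule mon_superset[OF f]) (rule keys_add)
  also have "\<dots> = (\<Prod>i\<in>?K. \<rho> i ^ Poly_Mapping.lookup m1 i) * (\<Prod>i\<in>?K. \<rho> i ^ Poly_Mapping.lookup m2 i)"
    by (simp add: lookup_add power_add prod.distrib)
  also have "\<dots> = mon \<rho> m1 * mon \<rho> m2"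
    by (simp add: mon_superset[OF f])
  finally show ?thesis .
qed

lemma mon_zero [simp]: "mon \<rho> 0 = 1"
  by (simp add: mon_def)

lemma mon_single [simp]: "mon \<rho> (Poly_Mapping.single i k) = \<rho> i ^ k"
  by (simp add: mon_def)

lemma ev_zero [simp]: "ev \<rho> 0 = 0"
  by (simp add: ev_def)

lemma ev_add: "ev \<rho> (p + q) = ev \<rho> p + (ev \<rho> q :: 'a::char2)"
proof -
  let ?K = "Poly_Mapping.keys p \<union> Poly_Mapping.keys q"
  have f: "finite ?K" by simp
  have "ev \<rho> (p + q) = (\<Sum>m\<in>?K. of_bit (Poly_Mapping.lookup (p + q) m) * mon \<rho> m)"
    by (rule ev_superset[OF f]) (rule keys_add)
  also have "\<dots> = (\<Sum>m\<in>?K. of_bit (Poly_Mapping.lookup p m) * mon \<rho> m) + (\<Sum>m\<in>?K. of_bit (Poly_Mapping.lookup q m) * mon \<rho> m)"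
    by (simp only: lookup_add of_bit_add distrib_right sum.distrib)
  also have "\<dots> = ev \<rho> p + ev \<rho> q"
    by (simp add: ev_superset[OF f])
  finally show ?thesis .
qed


lemma ev_single [simp]: "ev \<rho> (Poly_Mapping.single m c) = of_bit c * mon \<rho> m"
  by (subst ev_superset[of "{m}"]) auto

lemma ev_sum: "ev \<rho> (\<Sum>x\<in>A. f x) = (\<Sum>x\<in>A. ev \<rho> (f x) :: 'a::char2)"
  by (induction A rule: infinite_finite_induct) (simp_all add: ev_add)

lemma pm_expand: "(p :: 'a \<Rightarrow>\<^sub>0 'b::comm_monoid_add) = (\<Sum>k\<in>Poly_Mapping.keys p. Poly_Mapping.single k (Poly_Mapping.lookup p k))"
proof (rule poly_mapping_eqI)
  fix x
  have "(\<Sum>k\<in>Poly_Mapping.keys p. Poly_Mapping.lookup (Poly_Mapping.single k (Poly_Mapping.lookup p k)) x)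
     = (\<Sum>k\<in>Poly_Mapping.keys p. if k = x then Poly_Mapping.lookup p k else 0)"
    by (rule sum.cong) (auto simp: lookup_single when_def)
  also have "\<dots> = Poly_Mapping.lookup p x"
    by (auto simp: sum.delta' in_keys_iff)
  finally show "Poly_Mapping.lookup p x = Poly_Mapping.lookup (\<Sum>k\<in>Poly_Mapping.keys p. Poly_Mapping.single k (Poly_Mapping.lookup p k)) x"
    by (simp add: lookup_sum)
qed

lemma ev_mult: "ev \<rho> (p * q) = ev \<rho> p * (ev \<rho> q :: 'a::char2)"
proof -
  let ?P = "Poly_Mapping.keys p" and ?Q = "Poly_Mapping.keys q"
  have "p * q = (\<Sum>k\<in>?P. Poly_Mapping.single k (Poly_Mapping.lookup p k)) * (\<Sum>l\<in>?Q. Poly_Mapping.single l (Poly_Mapping.lookup q l))"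
    by (simp only: pm_expand[symmetric])
  also have "\<dots> = (\<Sum>k\<in>?P. \<Sum>l\<in>?Q. Poly_Mapping.single (k + l) (Poly_Mapping.lookup p k * Poly_Mapping.lookup q l))"
    by (simp add: sum_product mult_single)
  finally have pq: "p * q = \<dots>" .
  have e: "ev \<rho> (Poly_Mapping.single (k + l) (a * b)) = (of_bit a * mon \<rho> k) * (of_bit b * mon \<rho> l)" for k l a b
    by (simp only: ev_single of_bit_mult mon_add mult_ac)
  have "ev \<rho> (p * q) = (\<Sum>k\<in>?P. \<Sum>l\<in>?Q. (of_bit (Poly_Mapping.lookup p k) * mon \<rho> k) * (of_bit (Poly_Mapping.lookup q l) * mon \<rho> l))"
    unfolding pq by (simp only: ev_sum e)
  also have "\<dots> = ev \<rho> p * ev \<rho> q"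
    by (simp only: ev_def sum_product)
  finally show ?thesis .
qed

lemma ev_one [simp]: "ev \<rho> 1 = 1"
  by (subst single_one[symmetric], subst ev_single) simp

lemma ev_PVar [simp]: "ev \<rho> (PVar i) = \<rho> i"
  by (simp add: PVar_def)

lemma ev_PConst [simp]: "ev \<rho> (PConst c) = of_bit c"
  by (simp add: PConst_def)

lemma ev_pow: "ev \<rho> (p ^ n) = (ev \<rho> p :: 'a::char2) ^ n"
  by (induction n) (simp_all add: ev_mult)

lemma ev_prod: "ev \<rho> (\<Prod>x\<in>A. f x) = (\<Prod>x\<in>A. ev \<rho> (f x) :: 'a::char2)"
  by (induction A rule: infinite_finite_induct) (simp_all add: ev_mult)

lemma PConst_of_bit: "PConst c = of_bit c"
  by (cases c) (simp_all add: PConst_def)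

lemma psubst_ev [simp]: "psubst s p = ev s p"
  by (simp add: psubst_def ev_def PConst_of_bit mon_subst_def mon_def)

lemma ev_mon: "ev \<rho> (mon s m) = (mon (\<lambda>i. ev \<rho> (s i)) m :: 'a::char2)"
  by (simp add: mon_def ev_prod ev_pow)

lemma ev_ev: "ev \<rho> (ev s p) = (ev (\<lambda>i. ev \<rho> (s i)) p :: 'a::char2)"
  unfolding ev_def[of s p]
  by (simp add: ev_sum ev_mult ev_mon PConst_of_bit[symmetric]) (simp add: ev_def)

lemma single_pow: "Poly_Mapping.single (Poly_Mapping.single i (1::nat)) (1::bit) ^ n = Poly_Mapping.single (Poly_Mapping.single i n) 1"
proof (induction n)
  case 0 then show ?case by simp
next
  case (Suc n)
  then show ?case
    by (simp add: mult_single flip: single_add)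
qed

lemma prod_single: "(\<Prod>i\<in>A. Poly_Mapping.single (f i) (1::bit)) = Poly_Mapping.single (\<Sum>i\<in>A. f i) 1"
  by (induction A rule: infinite_finite_induct) (simp_all add: mult_single)

lemma mon_PVar: "mon PVar m = Poly_Mapping.single m 1"
proof -
  have "mon PVar m = (\<Prod>i\<in>Poly_Mapping.keys m. Poly_Mapping.single (Poly_Mapping.single i (Poly_Mapping.lookup m i)) (1::bit))"
    by (simp only: mon_def PVar_def single_pow)
  also have "\<dots> = Poly_Mapping.single m 1"
    by (simp only: prod_single pm_expand[symmetric])
  finally show ?thesis .
qed

lemma ev_PVar_id [simp]: "ev PVar p = p"
proof -
  have "ev PVar p = (\<Sum>m\<in>Poly_Mapping.keys p. Poly_Mapping.single m (Poly_Mapping.lookup p m))"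
    unfolding ev_def mon_PVar
    by (rule sum.cong) (auto simp: PConst_of_bit[symmetric] PConst_def mult_single)
  then show ?thesis by (simp only: pm_expand[symmetric])
qed


lemma ev_cong:
  assumes "\<And>i. i \<in> vars p \<Longrightarrow> \<rho> i = \<rho>' i"
  shows "ev \<rho> p = ev \<rho>' p"
proof -
  have r: "\<rho> i = \<rho>' i" if "m \<in> Poly_Mapping.keys p" "i \<in> Poly_Mapping.keys m" for m i
    using assms that by (auto simp: vars_def)
  show ?thesis unfolding ev_def mon_def
    by (intro sum.cong refl arg_cong2[where f = "(*)"] prod.cong) (simp_all add: r)
qed

lemma vars_add: "vars (p + q) \<subseteq> vars p \<union> vars q"
  unfolding vars_def using keys_add[of p q] by blast

lemma vars_mult: "vars (p * q) \<subseteq> vars p \<union> vars q"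
proof
  fix x assume "x \<in> vars (p * q)"
  then obtain m where m: "m \<in> Poly_Mapping.keys (p * q)" "x \<in> Poly_Mapping.keys m"
    by (auto simp: vars_def)
  then obtain a b where "m = a + b" "a \<in> Poly_Mapping.keys p" "b \<in> Poly_Mapping.keys q"
    using keys_mult[of p q] by blast
  then show "x \<in> vars p \<union> vars q"
    using m keys_add[of a b] by (auto simp: vars_def)
qed

lemma vars_zero [simp]: "vars 0 = {}" by (simp add: vars_def)
lemma vars_one [simp]: "vars 1 = {}" by (simp add: vars_def)
lemma vars_PVar [simp]: "vars (PVar i) = {i}" by (simp add: vars_def PVar_def)
lemma vars_of_bit [simp]: "vars (of_bit c) = {}" by (cases c) simp_all

lemma vars_sum: "vars (\<Sum>x\<in>A. f x) \<subseteq> (\<Union>x\<in>A. vars (f x))"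
proof (induction A rule: infinite_finite_induct)
  case (insert x F) then show ?case using vars_add[of "f x" "sum f F"] by auto
qed simp_all

lemma vars_prod: "vars (\<Prod>x\<in>A. f x) \<subseteq> (\<Union>x\<in>A. vars (f x))"
proof (induction A rule: infinite_finite_induct)
  case (insert x F) then show ?case using vars_mult[of "f x" "prod f F"] by auto
qed simp_all

lemma vars_pow: "vars (p ^ n) \<subseteq> vars p"
proof (induction n)
  case (Suc n) then show ?case using vars_mult[of p "p ^ n"] by auto
qed simp

lemma vars_mon: "vars (mon s m) \<subseteq> (\<Union>i\<in>Poly_Mapping.keys m. vars (s i))"
proof -
  have "vars (mon s m) \<subseteq> (\<Union>i\<in>Poly_Mapping.keys m. vars (s i ^ Poly_Mapping.lookup m i))"
    unfolding mon_def by (rule vars_prod)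
  also have "\<dots> \<subseteq> (\<Union>i\<in>Poly_Mapping.keys m. vars (s i))"
    using vars_pow by (intro UN_mono) auto
  finally show ?thesis .
qed

lemma vars_ev: "vars (ev s p) \<subseteq> (\<Union>i\<in>vars p. vars (s i))"
proof -
  have "vars (ev s p) \<subseteq> (\<Union>m\<in>Poly_Mapping.keys p. vars (of_bit (Poly_Mapping.lookup p m) * mon s m))"
    unfolding ev_def by (rule vars_sum)
  also have "\<dots> \<subseteq> (\<Union>m\<in>Poly_Mapping.keys p. vars (mon s m))"
  proof (intro UN_mono order.refl)
    fix m show "vars (of_bit (Poly_Mapping.lookup p m) * mon s m) \<subseteq> vars (mon s m)"
      using vars_mult[of "of_bit (Poly_Mapping.lookup p m)" "mon s m"] by (simp only: vars_of_bit) blast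
  qed
  also have "\<dots> \<subseteq> (\<Union>m\<in>Poly_Mapping.keys p. \<Union>i\<in>Poly_Mapping.keys m. vars (s i))"
    by (intro UN_mono order.refl vars_mon)
  also have "\<dots> = (\<Union>i\<in>vars p. vars (s i))"
    unfolding vars_def by blast
  finally show ?thesis .
qed


lemma discard_n_dom [simp]: "dom (discard_n n) = n" by (induction n) auto
lemma discard_n_cod [simp]: "cod (discard_n n) = 0" by (induction n) auto
lemma discard_n_wt [simp]: "wt (discard_n n)" by (induction n) auto
lemma copy_n_dom [simp]: "dom (copy_n n) = n" by (induction n) auto
lemma copy_n_cod [simp]: "cod (copy_n n) = n + n" by (induction n) auto
lemma copy_n_wt [simp]: "wt (copy_n n)" by (induction n) auto

lemma eqA_wt: "eqA f g \<Longrightarrow> wt f \<and> wt g \<and> dom f = dom g \<and> cod f = cod g"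
  by (induction rule: eqA.induct) auto

lemma eqA_wtD:
  assumes "eqA f g"
  shows "wt f" "wt g" "dom g = dom f" "cod g = cod f"
  using eqA_wt[OF assms] by auto

section \<open>Soundness\<close>

lemma psubst_eq_ev [simp]: "psubst = ev"
  by (intro ext) simp

lemma length_interp: "wt f \<Longrightarrow> length (interp f) = cod f"
proof (induction f)
  case (G x) then show ?case by (cases x) auto
qed auto

lemma vars_interp: "wt f \<Longrightarrow> p \<in> set (interp f) \<Longrightarrow> vars p \<subseteq> {..<dom f}"
proof (induction f arbitrary: p)
  case (G x) then show ?case
    using vars_add[of "PVar 0" "PVar 1"] vars_mult[of "PVar 0" "PVar 1"]
    by (cases x) auto
next
  case (Comp f g)
  then obtain q where q: "q \<in> set (interp g)" "p = ev (\<lambda>i. interp f ! i) q" by auto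
  have "vars q \<subseteq> {..<cod f}" using Comp q by auto
  moreover have "i < cod f \<Longrightarrow> vars (interp f ! i) \<subseteq> {..<dom f}" for i
    using Comp length_interp[of f] by (auto intro!: Comp.IH(1))
  ultimately have "(\<Union>i\<in>vars q. vars (interp f ! i)) \<subseteq> {..<dom f}" by blast
  then show ?case using vars_ev[of "\<lambda>i. interp f ! i" q] q by auto
next
  case (Tensor f g)
  show ?case
  proof (cases "p \<in> set (interp f)")
    case True then show ?thesis using Tensor by fastforce
  next
    case False
    then obtain q where q: "q \<in> set (interp g)" "p = ev (\<lambda>i. PVar (i + dom f)) q" using Tensor by auto
    have "vars q \<subseteq> {..<dom g}" using Tensor q by auto
    then have "(\<Union>x\<in>vars q. vars (PVar (x + dom f))) \<subseteq> {..<dom f + dom g}" by auto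
    then show ?thesis using vars_ev[of "\<lambda>i. PVar (i + dom f)" q] q by auto
  qed
qed auto

lemma ev_id_on:
  assumes "vars p \<subseteq> {..<n}"
  shows "ev (\<lambda>i. map PVar [0..<n] ! i) p = p"
proof -
  have "ev (\<lambda>i. map PVar [0..<n] ! i) p = ev PVar p"
    by (rule ev_cong) (use assms in auto)
  then show ?thesis by simp
qed

lemma wire_comp:
  "(\<forall>j\<in>set L'. j < length L) \<Longrightarrow>
   map (ev (\<lambda>i. map PVar L ! i)) (map PVar L') = map PVar (map ((!) L) L')"
  by auto

lemma wire_tensor:
  "map PVar L1 @ map (ev (\<lambda>i. PVar (i + d))) (map PVar L2) = map PVar (L1 @ map (\<lambda>i. i + d) L2)"
  by simp

lemma interp_discard_n [simp]: "interp (discard_n n) = []"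
  by (induction n) auto

definition wire :: "circ \<Rightarrow> nat \<Rightarrow> (nat \<Rightarrow> nat) \<Rightarrow> bool" where
  "wire f N u \<longleftrightarrow> interp f = map (\<lambda>i. PVar (u i)) [0..<N]"

lemma comp_wire:
  assumes "wire f M u" "wire g N v" "\<forall>i<N. v i < M"
  shows "wire (Comp f g) N (\<lambda>i. u (v i))"
  using assms by (auto simp: wire_def)

lemma map_upt_split: "map f [0..<m + n] = map f [0..<m] @ map (\<lambda>i. f (i + m)) [0..<n]"
proof -
  have "[0..<m + n] = [0..<m] @ [m..<m + n]" by (rule upt_add_eq_append) simp
  moreover have "[m..<m + n] = map (\<lambda>i. i + m) [0..<n]" by (subst map_add_upt) (simp add: add.commute)
  ultimately show ?thesis by simp
qed

lemma wire_cong: "wire f N u \<Longrightarrow> (\<forall>i<N. u i = v i) \<Longrightarrow> wire f N v"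
  by (auto simp: wire_def)

lemma wire_cong': "wire f N u \<Longrightarrow> N = N' \<Longrightarrow> (\<forall>i<N. u i = v i) \<Longrightarrow> wire f N' v"
  by (auto simp: wire_def)

lemma tensor_wire:
  assumes "wire f M1 u" "wire g M2 v"
  shows "wire (Tensor f g) (M1 + M2) (\<lambda>i. if i < M1 then u i else v (i - M1) + dom f)"
  using assms unfolding wire_def map_upt_split by simp

lemma wire_Id: "wire (Id n) n (\<lambda>i. i)" by (simp add: wire_def)
lemma wire_Sw: "wire (Sw a b) (b + a) (\<lambda>i. if i < b then a + i else i - b)"
proof -
  have "[a..<a + b] = map (\<lambda>i. i + a) [0..<b]" by (subst map_add_upt) (simp add: add.commute)
  then show ?thesis unfolding wire_def map_upt_split by (simp add: add.commute)
qed
lemma wire_Copy: "wire (G Copy) 2 (\<lambda>i. 0)" by (simp add: wire_def eval_nat_numeral)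

lemma wire_eq:
  assumes "wire f N u" "wire g N v" "\<forall>i<N. u i = v i"
  shows "interp f = interp g"
  using assms by (auto simp: wire_def)

lemma wire_copy_n: "wire (copy_n n) (n + n) (\<lambda>i. if i < n then i else i - n)"
proof (induction n)
  case 0 then show ?case by (simp add: wire_def)
next
  case (Suc n)
  note W = comp_wire[OF tensor_wire[OF wire_Copy Suc] tensor_wire[OF tensor_wire[OF wire_Id wire_Sw] wire_Id]]
  show ?case
    unfolding copy_n.simps by (rule wire_cong'[OF W]) auto
qed

lemma interp_copy_n: "interp (copy_n n) = map PVar ([0..<n] @ [0..<n])"
  using wire_copy_n[of n] unfolding wire_def map_upt_split by simp

lemma wire_eq':
  assumes "wire f N u" "wire g N' v" "N = N'" "\<forall>i<N. u i = v i"
  shows "interp f = interp g"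
  using assms by (auto simp: wire_def)

lemma nth_PVar_upt: "i < n \<Longrightarrow> map PVar [0..<n] ! i = PVar i" by simp

lemma interp_interchange:
  assumes wt: "wt f" "wt g" "wt h" "wt k" "cod f = dom h" "cod g = dom k"
  shows "interp (Comp (Tensor f g) (Tensor h k)) = interp (Tensor (Comp f h) (Comp g k))"
proof -
  have lf: "length (interp f) = cod f" and lg: "length (interp g) = cod g"
    using wt length_interp by auto
  have 1: "ev (\<lambda>i. (interp f @ map (ev (\<lambda>i. PVar (i + dom f))) (interp g)) ! i) p = ev (\<lambda>i. interp f ! i) p"
    if "p \<in> set (interp h)" for p
  proof (rule ev_cong)
    fix i assume "i \<in> vars p"
    then have "i < cod f" using vars_interp[OF wt(3) that] wt by auto
    then show "(interp f @ map (ev (\<lambda>i. PVar (i + dom f))) (interp g)) ! i = interp f ! i"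
      using lf by (simp add: nth_append)
  qed
  have 2: "ev (\<lambda>i. (interp f @ map (ev (\<lambda>i. PVar (i + dom f))) (interp g)) ! i) (ev (\<lambda>i. PVar (i + dom h)) q)
      = ev (\<lambda>i. PVar (i + dom f)) (ev (\<lambda>i. interp g ! i) q)"
    if "q \<in> set (interp k)" for q
  proof -
    have "ev (\<lambda>i. (interp f @ map (ev (\<lambda>i. PVar (i + dom f))) (interp g)) ! i) (ev (\<lambda>i. PVar (i + dom h)) q)
        = ev (\<lambda>i. (interp f @ map (ev (\<lambda>i. PVar (i + dom f))) (interp g)) ! (i + dom h)) q"
      by (simp add: ev_ev)
    also have "\<dots> = ev (\<lambda>i. ev (\<lambda>i. PVar (i + dom f)) (interp g ! i)) q"
    proof (rule ev_cong)
      fix i assume "i \<in> vars q"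
      then have "i < cod g" using vars_interp[OF wt(4) that] wt by auto
      then show "(interp f @ map (ev (\<lambda>i. PVar (i + dom f))) (interp g)) ! (i + dom h) = ev (\<lambda>i. PVar (i + dom f)) (interp g ! i)"
        using lf lg wt by (simp add: nth_append)
    qed
    also have "\<dots> = ev (\<lambda>i. PVar (i + dom f)) (ev (\<lambda>i. interp g ! i) q)"
      by (simp add: ev_ev)
    finally show ?thesis .
  qed
  show ?thesis using 1 2 by simp
qed

lemma map_nth_len [simp]: "n = length xs \<Longrightarrow> map (\<lambda>i. xs ! i) [0..<n] = xs"
  by (simp add: map_nth)

lemma map_nth_swap:
  assumes "length xs = p" "length ys = q"
  shows "map (\<lambda>i. (xs @ ys) ! i) ([p..<p + q] @ [0..<p]) = ys @ xs"
proof -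
  have e: "[p..<p + q] = map (\<lambda>i. i + p) [0..<q]" by (subst map_add_upt) (simp add: add.commute)
  have "map (\<lambda>i. (xs @ ys) ! i) [p..<p + q] = ys"
    unfolding e using assms by (simp add: nth_append o_def map_nth)
  moreover have "map (\<lambda>i. (xs @ ys) ! i) [0..<p] = map (\<lambda>i. xs ! i) [0..<p]"
    by (rule map_cong) (use assms in \<open>auto simp: nth_append\<close>)
  moreover have "map (\<lambda>i. xs ! i) [0..<p] = xs" using assms by simp
  ultimately show ?thesis by simp
qed

lemma nth_sw_list1: "i < b \<Longrightarrow> ([a..<a + b] @ [0..<a]) ! i = a + i"
  by (simp add: nth_append)

lemma nth_sw_list2: "i < a \<Longrightarrow> ([a..<a + b] @ [0..<a]) ! (i + b) = i"
  by (simp add: nth_append)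

lemma interp_sw_natural:
  assumes wt: "wt f" "wt g"
  shows "interp (Comp (Tensor f g) (Sw (cod f) (cod g))) = interp (Comp (Sw (dom f) (dom g)) (Tensor g f))"
proof -
  have lf: "length (interp f) = cod f" and lg: "length (interp g) = cod g"
    using wt length_interp by auto
  have L: "interp (Comp (Tensor f g) (Sw (cod f) (cod g))) = map (ev (\<lambda>i. PVar (i + dom f))) (interp g) @ interp f"
    using map_nth_swap[of "interp f" "cod f" "map (ev (\<lambda>i. PVar (i + dom f))) (interp g)" "cod g"] lf lg
    by (simp add: o_def)
  let ?L = "[dom f..<dom f + dom g] @ [0..<dom f]"
  have 1: "ev (\<lambda>i. map PVar ?L ! i) q = ev (\<lambda>i. PVar (i + dom f)) q" if "q \<in> set (interp g)" for q
  proof (rule ev_cong)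
    fix i assume "i \<in> vars q"
    then have "i < dom g" using vars_interp[OF wt(2) that] by auto
    then have "map PVar ?L ! i = PVar (?L ! i)" by (intro nth_map) simp
    also have "?L ! i = dom f + i" by (rule nth_sw_list1) fact
    finally show "map PVar ?L ! i = PVar (i + dom f)" by (simp add: add.commute)
  qed
  have 2: "ev (\<lambda>i. map PVar ?L ! i) (ev (\<lambda>i. PVar (i + dom g)) p) = p" if "p \<in> set (interp f)" for p
  proof -
    have "ev (\<lambda>i. map PVar ?L ! i) (ev (\<lambda>i. PVar (i + dom g)) p) = ev (\<lambda>i. map PVar ?L ! (i + dom g)) p"
      by (simp add: ev_ev)
    also have "\<dots> = ev PVar p"
    proof (rule ev_cong)
      fix i assume "i \<in> vars p"
      then have "i < dom f" using vars_interp[OF wt(1) that] by auto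
      then have "map PVar ?L ! (i + dom g) = PVar (?L ! (i + dom g))" by (intro nth_map) simp
      also have "?L ! (i + dom g) = i" by (rule nth_sw_list2) fact
      finally show "map PVar ?L ! (i + dom g) = PVar i" .
    qed
    finally show ?thesis by simp
  qed
  have R: "interp (Comp (Sw (dom f) (dom g)) (Tensor g f)) = map (ev (\<lambda>i. PVar (i + dom f))) (interp g) @ interp f"
    using 1 2 by (simp add: map_idI)
  show ?thesis using L R by simp
qed

lemma interp_copy_natural:
  assumes wt: "wt f"
  shows "interp (Comp f (copy_n (cod f))) = interp (Comp (copy_n (dom f)) (Tensor f f))"
proof -
  have lf: "length (interp f) = cod f" using wt length_interp by auto
  have L: "interp (Comp f (copy_n (cod f))) = interp f @ interp f"
    using lf by (simp add: interp_copy_n o_def map_nth)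
  let ?L = "[0..<dom f] @ [0..<dom f]"
  have 1: "ev (\<lambda>i. map PVar ?L ! i) p = p" if "p \<in> set (interp f)" for p
  proof -
    have "ev (\<lambda>i. map PVar ?L ! i) p = ev PVar p"
    proof (rule ev_cong)
      fix i assume "i \<in> vars p"
      then have "i < dom f" using vars_interp[OF wt(1) that] by auto
      then show "map PVar ?L ! i = PVar i" by (simp add: nth_append)
    qed
    then show ?thesis by simp
  qed
  have 2: "ev (\<lambda>i. map PVar ?L ! i) (ev (\<lambda>i. PVar (i + dom f)) p) = p" if "p \<in> set (interp f)" for p
  proof -
    have "ev (\<lambda>i. map PVar ?L ! i) (ev (\<lambda>i. PVar (i + dom f)) p) = ev (\<lambda>i. map PVar ?L ! (i + dom f)) p"
      by (simp add: ev_ev)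
    also have "\<dots> = ev PVar p"
    proof (rule ev_cong)
      fix i assume "i \<in> vars p"
      then have "i < dom f" using vars_interp[OF wt(1) that] by auto
      then show "map PVar ?L ! (i + dom f) = PVar i" by (simp add: nth_append)
    qed
    finally show ?thesis by simp
  qed
  have R: "interp (Comp (copy_n (dom f)) (Tensor f f)) = interp f @ interp f"
    using 1 2 by (simp add: interp_copy_n map_idI del: upt_Suc)
  show ?thesis using L R by simp
qed

lemma interp_id_left: "wt f \<Longrightarrow> interp (Comp (Id (dom f)) f) = interp f"
  using vars_interp[of f] by (auto intro!: map_idI ev_id_on)

lemma interp_id_right: "wt f \<Longrightarrow> interp (Comp f (Id (cod f))) = interp f"
  using length_interp[of f] by (simp add: o_def map_nth)

lemma interp_comp_assoc:
  assumes wt: "wt f" "wt g" "wt h" "cod f = dom g" "cod g = dom h"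
  shows "interp (Comp (Comp f g) h) = interp (Comp f (Comp g h))"
proof -
  have lg: "length (interp g) = cod g" using wt length_interp by auto
  have "ev (\<lambda>i. map (ev (\<lambda>i. interp f ! i)) (interp g) ! i) p = ev (\<lambda>i. ev (\<lambda>i. interp f ! i) (interp g ! i)) p"
    if "p \<in> set (interp h)" for p
  proof (rule ev_cong)
    fix i assume "i \<in> vars p"
    then have "i < cod g" using vars_interp[OF wt(3) that] wt by auto
    then show "map (ev (\<lambda>i. interp f ! i)) (interp g) ! i = ev (\<lambda>i. interp f ! i) (interp g ! i)"
      using lg by simp
  qed
  then show ?thesis by (simp add: ev_ev)
qed

lemma interp_tensor_assoc:
  "interp (Tensor (Tensor f g) h) = interp (Tensor f (Tensor g h))"
  by (simp add: ev_ev o_def add.assoc add.commute add.left_commute)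

lemma map_ev_PVar [simp]: "map (ev PVar) xs = xs"
  by (induction xs) auto

lemma soundness: "eqA f g \<Longrightarrow> interp f = interp g"
proof (induction rule: eqA.induct)
  case (tensor_cong f f' g g')
  then show ?case using eqA_wtD(3)[OF tensor_cong(1)] by simp
next
  case (id_left f) then show ?case by (rule interp_id_left)
next
  case (id_right f) then show ?case by (rule interp_id_right)
next
  case (comp_assoc f g h) then show ?case by (rule interp_comp_assoc)
next
  case (tensor_assoc f g h) show ?case by (rule interp_tensor_assoc)
next
  case (tensor_id m n) then show ?case by (simp add: map_upt_split)
next
  case (interchange f g h k) then show ?case by (rule interp_interchange)
next
  case (sw_inv a b)
  show ?case
    by (rule wire_eq'[OF comp_wire[OF wire_Sw wire_Sw] wire_Id]) auto
next
  case (sw_zero_right a)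
  show ?case by (rule wire_eq'[OF wire_Sw wire_Id]) auto
next
  case (sw_zero_left a)
  show ?case by (rule wire_eq'[OF wire_Sw wire_Id]) auto
next
  case (sw_hex_left a b c)
  show ?case
    by (rule wire_eq'[OF wire_Sw comp_wire[OF tensor_wire[OF wire_Id wire_Sw] tensor_wire[OF wire_Sw wire_Id]]]) auto
next
  case (sw_hex_right a b c)
  show ?case
    by (rule wire_eq'[OF wire_Sw comp_wire[OF tensor_wire[OF wire_Sw wire_Id] tensor_wire[OF wire_Id wire_Sw]]]) auto
next
  case (sw_natural f g) then show ?case by (rule interp_sw_natural)
next
  case (copy_natural f) then show ?case by (rule interp_copy_natural)
next
  case (distrib)
  show ?case by (simp add: eval_nat_numeral ev_add ev_mult ring_distribs)
qed (simp_all add: eval_nat_numeral ev_add ev_mult ac_simps)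


section \<open>The quotient: morphisms of the free category modulo A\<close>

lemma eqA_part_equivp: "part_equivp eqA"
proof (rule part_equivpI)
  show "\<exists>x. eqA x x" by (rule exI[of _ "Id 0"]) (rule eqA.refl, simp)
  show "symp eqA" by (rule sympI) (rule eqA.sym)
  show "transp eqA" by (rule transpI) (rule eqA.trans)
qed

quotient_type mor = circ / partial: eqA
  morphisms rep_mor abs_mor
  by (rule eqA_part_equivp)

lift_definition mdom :: "mor \<Rightarrow> nat" is dom by (simp add: eqA_wtD)
lift_definition mcod :: "mor \<Rightarrow> nat" is cod by (simp add: eqA_wtD)
lift_definition mcomp :: "mor \<Rightarrow> mor \<Rightarrow> mor" is "\<lambda>f g. if cod f = dom g then Comp f g else Id 0"
  by (auto simp: eqA_wtD intro: eqA.comp_cong eqA.refl)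
lift_definition mtens :: "mor \<Rightarrow> mor \<Rightarrow> mor" is Tensor
  by (rule eqA.tensor_cong)
lift_definition mid :: "nat \<Rightarrow> mor" is Id by (rule eqA.refl) simp
lift_definition msw :: "nat \<Rightarrow> nat \<Rightarrow> mor" is Sw by (rule eqA.refl) simp
lift_definition mgen :: "gen \<Rightarrow> mor" is G by (rule eqA.refl) simp
lift_definition mdisc :: "nat \<Rightarrow> mor" is discard_n by (rule eqA.refl) simp
lift_definition mcopy :: "nat \<Rightarrow> mor" is copy_n by (rule eqA.refl) simp
lift_definition minterp :: "mor \<Rightarrow> mpoly list" is interp by (rule soundness)

lemma mdom_simps [simp]:
  "mdom (mcomp f g) = (if mcod f = mdom g then mdom f else 0)"
  "mdom (mtens f g) = mdom f + mdom g"
  "mdom (mid n) = n" "mdom (msw a b) = a + b" "mdom (mgen x) = gdom x"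
  "mdom (mdisc n) = n" "mdom (mcopy n) = n"
  by (transfer, simp)+

lemma mcod_simps [simp]:
  "mcod (mcomp f g) = (if mcod f = mdom g then mcod g else 0)"
  "mcod (mtens f g) = mcod f + mcod g"
  "mcod (mid n) = n" "mcod (msw a b) = b + a" "mcod (mgen x) = gcod x"
  "mcod (mdisc n) = 0" "mcod (mcopy n) = n + n"
  by (transfer, simp)+

lemma m_id_left: "mcomp (mid (mdom f)) f = f"
  by transfer (auto intro: eqA.id_left dest: eqA_wtD)
lemma m_id_right: "mcomp f (mid (mcod f)) = f"
  by transfer (auto intro: eqA.id_right dest: eqA_wtD)
lemma m_id_left' [simp]: "mdom f = n \<Longrightarrow> mcomp (mid n) f = f"
  using m_id_left by blast
lemma m_id_right' [simp]: "mcod f = n \<Longrightarrow> mcomp f (mid n) = f"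
  using m_id_right by blast
lemma m_comp_assoc:
  "mcod f = mdom g \<Longrightarrow> mcod g = mdom h \<Longrightarrow> mcomp (mcomp f g) h = mcomp f (mcomp g h)"
  by transfer (auto intro: eqA.comp_assoc dest: eqA_wtD)
lemma m_tens_assoc: "mtens (mtens f g) h = mtens f (mtens g h)"
  by transfer (auto intro: eqA.tensor_assoc dest: eqA_wtD)
lemma m_tens_unit_left [simp]: "mtens (mid 0) f = f"
  by transfer (auto intro: eqA.tensor_unit_left dest: eqA_wtD)
lemma m_tens_unit_right [simp]: "mtens f (mid 0) = f"
  by transfer (auto intro: eqA.tensor_unit_right dest: eqA_wtD)
lemma m_tens_id: "mtens (mid m) (mid n) = mid (m + n)"
  by transfer (rule eqA.tensor_id)
lemma m_interchange:
  "mcod f = mdom h \<Longrightarrow> mcod g = mdom k \<Longrightarrow> mcomp (mtens f g) (mtens h k) = mtens (mcomp f h) (mcomp g k)"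
  by transfer (auto intro: eqA.interchange dest: eqA_wtD)
lemma m_sw_inv: "mcomp (msw a b) (msw b a) = mid (a + b)"
  by transfer (simp add: eqA.sw_inv)
lemma m_sw_zero_right [simp]: "msw a 0 = mid a"
  by transfer (rule eqA.sw_zero_right)
lemma m_sw_zero_left [simp]: "msw 0 a = mid a"
  by transfer (rule eqA.sw_zero_left)
lemma m_sw_hex_left: "msw (a + b) c = mcomp (mtens (mid a) (msw b c)) (mtens (msw a c) (mid b))"
  by transfer (simp add: eqA.sw_hex_left add.commute add.left_commute)
lemma m_sw_hex_right: "msw a (b + c) = mcomp (mtens (msw a b) (mid c)) (mtens (mid b) (msw a c))"
  by transfer (simp add: eqA.sw_hex_right add.commute add.left_commute)
lemma m_sw_natural:
  "mcomp (mtens f g) (msw (mcod f) (mcod g)) = mcomp (msw (mdom f) (mdom g)) (mtens g f)"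
  by transfer (auto intro: eqA.sw_natural dest: eqA_wtD)
lemma m_copy_natural: "mcomp f (mcopy (mcod f)) = mcomp (mcopy (mdom f)) (mtens f f)"
  by transfer (auto intro: eqA.copy_natural dest: eqA_wtD)
lemma m_discard_natural: "mcomp f (mdisc (mcod f)) = mdisc (mdom f)"
  by transfer (auto intro: eqA.discard_natural dest: eqA_wtD)
lemma mcopy_simps:
  "mcopy 0 = mid 0"
  "mcopy (Suc n) = mcomp (mtens (mgen Copy) (mcopy n)) (mtens (mtens (mid 1) (msw 1 n)) (mid n))"
  by (transfer, simp add: eqA.refl)+
lemma mdisc_simps:
  "mdisc 0 = mid 0"
  "mdisc (Suc n) = mtens (mgen Discard) (mdisc n)"
  by (transfer, simp add: eqA.refl)+

abbreviation msigma :: mor where "msigma \<equiv> msw 1 1"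

lemma m_copy_comm [simplified]: "mcomp (mgen Copy) msigma = mgen Copy"
  by transfer (simp add: eqA.copy_comm[simplified])
lemma m_copy_assoc [simplified]: "mcomp (mgen Copy) (mtens (mgen Copy) (mid 1)) = mcomp (mgen Copy) (mtens (mid 1) (mgen Copy))"
  by transfer (simp add: eqA.copy_assoc[simplified])
lemma m_copy_unit [simplified]: "mcomp (mgen Copy) (mtens (mgen Discard) (mid 1)) = mid 1"
  by transfer (simp add: eqA.copy_unit[simplified])
lemma m_add_comm [simplified]: "mcomp msigma (mgen Add) = mgen Add"
  by transfer (simp add: eqA.add_comm[simplified])
lemma m_add_assoc [simplified]: "mcomp (mtens (mgen Add) (mid 1)) (mgen Add) = mcomp (mtens (mid 1) (mgen Add)) (mgen Add)"
  by transfer (simp add: eqA.add_assoc[simplified])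
lemma m_add_unit_left [simplified]: "mcomp (mtens (mgen Zero) (mid 1)) (mgen Add) = mid 1"
  by transfer (simp add: eqA.add_unit_left[simplified])
lemma m_and_comm [simplified]: "mcomp msigma (mgen And) = mgen And"
  by transfer (simp add: eqA.and_comm[simplified])
lemma m_and_assoc [simplified]: "mcomp (mtens (mgen And) (mid 1)) (mgen And) = mcomp (mtens (mid 1) (mgen And)) (mgen And)"
  by transfer (simp add: eqA.and_assoc[simplified])
lemma m_and_unit_left [simplified]: "mcomp (mtens (mgen One) (mid 1)) (mgen And) = mid 1"
  by transfer (simp add: eqA.and_unit_left[simplified])
lemma m_copy_add [simplified]: "mcomp (mgen Copy) (mgen Add) = mcomp (mgen Discard) (mgen Zero)"
  by transfer (simp add: eqA.copy_add[simplified])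
lemma m_distrib [simplified]: "mcomp (mtens (mid 1) (mgen Add)) (mgen And) =
   mcomp (mcomp (mcomp (mtens (mgen Copy) (mid 2)) (mtens (mtens (mid 1) msigma) (mid 1)))
                (mtens (mgen And) (mgen And))) (mgen Add)"
  by transfer (simp add: eqA.distrib[simplified])


notation mcomp (infixl ";;" 55)
notation mtens (infixr "\<otimes>" 65)

lemma disc_unique: "mcod f = 0 \<Longrightarrow> f = mdisc (mdom f)"
  by (metis m_discard_natural m_id_right mdisc_simps(1))

lemma mdisc_add: "mdisc (m + n) = mdisc m \<otimes> mdisc n"
  using disc_unique[of "mdisc m \<otimes> mdisc n"] by simp

lemma mcopy_one: "mcopy (Suc 0) = mgen Copy"
  by (simp add: mcopy_simps m_tens_id)

lemma mdisc_one: "mdisc (Suc 0) = mgen Discard"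
  by (simp add: mdisc_simps)

lemma sw_disc_right: "msw a b ;; (mid b \<otimes> mdisc a) = mdisc a \<otimes> mid b"
proof -
  have "(mdisc a \<otimes> mid b) ;; msw 0 b = msw a b ;; (mid b \<otimes> mdisc a)"
    using m_sw_natural[of "mdisc a" "mid b"] by simp
  then show ?thesis by simp
qed

lemma sw_disc_left: "msw a b ;; (mdisc b \<otimes> mid a) = mid a \<otimes> mdisc b"
proof -
  have "(mid a \<otimes> mdisc b) ;; msw a 0 = msw a b ;; (mdisc b \<otimes> mid a)"
    using m_sw_natural[of "mid a" "mdisc b"] by simp
  then show ?thesis by simp
qed

lemma copy_counit_r1: "mgen Copy ;; (mid (Suc 0) \<otimes> mgen Discard) = mid (Suc 0)"
proof -
  have "mgen Copy ;; (mid 1 \<otimes> mgen Discard) = (mgen Copy ;; msigma) ;; (mid 1 \<otimes> mgen Discard)"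
    by (simp add: m_copy_comm)
  also have "\<dots> = mgen Copy ;; (msigma ;; (mid 1 \<otimes> mdisc 1))"
    by (simp add: m_comp_assoc mdisc_one)
  also have "\<dots> = mgen Copy ;; (mdisc 1 \<otimes> mid 1)"
    by (simp only: sw_disc_right)
  also have "\<dots> = mid 1" by (simp add: mdisc_one m_copy_unit)
  finally show ?thesis by simp
qed

lemma copy_counit_l1: "mgen Copy ;; (mgen Discard \<otimes> mid (Suc 0)) = mid (Suc 0)"
  using m_copy_unit by simp

lemma copy_counit_r: "mcopy n ;; (mid n \<otimes> mdisc n) = mid n"
proof (induction n)
  case 0 then show ?case by (simp add: mcopy_simps mdisc_simps)
next
  case (Suc n)
  let ?W = "(mid 1 \<otimes> msw 1 n) \<otimes> mid n"
  have ms: "mid (Suc n) = mid (Suc 0) \<otimes> mid n" by (simp add: m_tens_id)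
  have WD: "?W ;; (mid (Suc n) \<otimes> mdisc (Suc n)) = (mid 1 \<otimes> mgen Discard) \<otimes> (mid n \<otimes> mdisc n)"
  proof -
    have "?W ;; (mid (Suc n) \<otimes> mdisc (Suc n)) = (mid 1 \<otimes> (msw 1 n \<otimes> mid n)) ;; (mid 1 \<otimes> ((mid n \<otimes> mdisc 1) \<otimes> mdisc n))"
      by (simp add: ms m_tens_assoc[symmetric] mdisc_simps mdisc_one)
    also have "\<dots> = mid 1 \<otimes> ((msw 1 n ;; (mid n \<otimes> mdisc 1)) \<otimes> (mid n ;; mdisc n))"
      by (simp add: m_interchange)
    also have "\<dots> = mid 1 \<otimes> ((mdisc 1 \<otimes> mid n) \<otimes> mdisc n)"
      by (simp only: sw_disc_right) simp
    also have "\<dots> = (mid 1 \<otimes> mgen Discard) \<otimes> (mid n \<otimes> mdisc n)"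
      by (simp add: m_tens_assoc mdisc_one)
    finally show ?thesis .
  qed
  have "mcopy (Suc n) ;; (mid (Suc n) \<otimes> mdisc (Suc n)) = (mgen Copy \<otimes> mcopy n) ;; (?W ;; (mid (Suc n) \<otimes> mdisc (Suc n)))"
    by (simp add: mcopy_simps m_comp_assoc)
  also have "\<dots> = (mgen Copy ;; (mid 1 \<otimes> mgen Discard)) \<otimes> (mcopy n ;; (mid n \<otimes> mdisc n))"
    unfolding WD by (simp add: m_interchange)
  also have "\<dots> = mid (Suc n)"
    by (simp add: copy_counit_r1 Suc m_tens_id)
  finally show ?case .
qed

lemma copy_counit_l: "mcopy n ;; (mdisc n \<otimes> mid n) = mid n"
proof (induction n)
  case 0 then show ?case by (simp add: mcopy_simps mdisc_simps)
next
  case (Suc n)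
  let ?W = "(mid 1 \<otimes> msw 1 n) \<otimes> mid n"
  have ms: "mid (Suc n) = mid (Suc 0) \<otimes> mid n" by (simp add: m_tens_id)
  have WD: "?W ;; (mdisc (Suc n) \<otimes> mid (Suc n)) = (mgen Discard \<otimes> mid 1) \<otimes> (mdisc n \<otimes> mid n)"
  proof -
    have "?W ;; (mdisc (Suc n) \<otimes> mid (Suc n)) = (mid 1 \<otimes> (msw 1 n \<otimes> mid n)) ;; (mgen Discard \<otimes> ((mdisc n \<otimes> mid 1) \<otimes> mid n))"
      by (simp add: ms m_tens_assoc[symmetric] mdisc_simps)
    also have "\<dots> = mgen Discard \<otimes> ((msw 1 n ;; (mdisc n \<otimes> mid 1)) \<otimes> (mid n ;; mid n))"
      by (simp add: m_interchange)
    also have "\<dots> = mgen Discard \<otimes> ((mid 1 \<otimes> mdisc n) \<otimes> mid n)"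
      by (simp only: sw_disc_left) simp
    also have "\<dots> = (mgen Discard \<otimes> mid 1) \<otimes> (mdisc n \<otimes> mid n)"
      by (simp add: m_tens_assoc)
    finally show ?thesis .
  qed
  have "mcopy (Suc n) ;; (mdisc (Suc n) \<otimes> mid (Suc n)) = (mgen Copy \<otimes> mcopy n) ;; (?W ;; (mdisc (Suc n) \<otimes> mid (Suc n)))"
    by (simp add: mcopy_simps m_comp_assoc)
  also have "\<dots> = (mgen Copy ;; (mgen Discard \<otimes> mid 1)) \<otimes> (mcopy n ;; (mdisc n \<otimes> mid n))"
    unfolding WD by (simp add: m_interchange)
  also have "\<dots> = mid (Suc n)"
    by (simp add: copy_counit_l1 Suc m_tens_id)
  finally show ?case .
qed

section \<open>Pairing, projections, tuples\<close>

definition pr :: "nat \<Rightarrow> mor \<Rightarrow> mor \<Rightarrow> mor" where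
  "pr N A B = mcopy N ;; (A \<otimes> B)"

definition proj :: "nat \<Rightarrow> nat \<Rightarrow> mor" where
  "proj n j = mdisc j \<otimes> (mid (Suc 0) \<otimes> mdisc (n - Suc j))"

fun Tup :: "nat \<Rightarrow> mor list \<Rightarrow> mor" where
  "Tup N [] = mdisc N"
| "Tup N (X # Xs) = pr N X (Tup N Xs)"

lemma pr_dom [simp]: "mdom A = N \<Longrightarrow> mdom B = N \<Longrightarrow> mdom (pr N A B) = N"
  by (simp add: pr_def)
lemma pr_cod [simp]: "mdom A = N \<Longrightarrow> mdom B = N \<Longrightarrow> mcod (pr N A B) = mcod A + mcod B"
  by (simp add: pr_def)
lemma proj_dom [simp]: "j < n \<Longrightarrow> mdom (proj n j) = n"
  by (simp add: proj_def)
lemma proj_cod [simp]: "mcod (proj n j) = Suc 0"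
  by (simp add: proj_def)
lemma Tup_dom_cod: "(\<forall>X\<in>set Xs. mdom X = N) \<Longrightarrow> mdom (Tup N Xs) = N \<and> mcod (Tup N Xs) = sum_list (map mcod Xs)"
  by (induction Xs) auto
lemma Tup_dom [simp]: "(\<forall>X\<in>set Xs. mdom X = N) \<Longrightarrow> mdom (Tup N Xs) = N"
  using Tup_dom_cod by blast
lemma Tup_cod [simp]: "(\<forall>X\<in>set Xs. mdom X = N) \<Longrightarrow> mcod (Tup N Xs) = sum_list (map mcod Xs)"
  using Tup_dom_cod by blast

lemma pr_nat:
  assumes "mdom A = mcod h" "mdom B = mcod h"
  shows "h ;; pr (mcod h) A B = pr (mdom h) (h ;; A) (h ;; B)"
proof -
  have "h ;; pr (mcod h) A B = (h ;; mcopy (mcod h)) ;; (A \<otimes> B)"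
    unfolding pr_def using assms by (simp add: m_comp_assoc)
  also have "\<dots> = (mcopy (mdom h) ;; (h \<otimes> h)) ;; (A \<otimes> B)"
    by (simp only: m_copy_natural)
  also have "\<dots> = mcopy (mdom h) ;; ((h ;; A) \<otimes> (h ;; B))"
    using assms by (simp add: m_comp_assoc m_interchange)
  finally show ?thesis by (simp add: pr_def)
qed

lemma pr_post:
  assumes "mdom A = N" "mdom B = N" "mcod A = mdom X" "mcod B = mdom Y"
  shows "pr N A B ;; (X \<otimes> Y) = pr N (A ;; X) (B ;; Y)"
  unfolding pr_def using assms by (simp add: m_comp_assoc m_interchange)

lemma tens_disc_r: "A \<otimes> mdisc k = (mid (mdom A) \<otimes> mdisc k) ;; A"
proof -
  have "(mid (mdom A) \<otimes> mdisc k) ;; (A \<otimes> mid 0) = A \<otimes> mdisc k"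
    by (subst m_interchange) simp_all
  then have "(mid (mdom A) \<otimes> mdisc k) ;; A = A \<otimes> mdisc k"
    by (simp only: m_tens_unit_right)
  then show ?thesis by metis
qed

lemma tens_disc_l: "mdisc k \<otimes> A = (mdisc k \<otimes> mid (mdom A)) ;; A"
proof -
  have "(mdisc k \<otimes> mid (mdom A)) ;; (mid 0 \<otimes> A) = mdisc k \<otimes> A"
    by (subst m_interchange) simp_all
  then have "(mdisc k \<otimes> mid (mdom A)) ;; A = mdisc k \<otimes> A"
    by (simp only: m_tens_unit_left)
  then show ?thesis by metis
qed

lemma pr_disc_right: "mdom A = N \<Longrightarrow> pr N A (mdisc N) = A"
proof -
  assume a: "mdom A = N"
  have "pr N A (mdisc N) = mcopy N ;; ((mid N \<otimes> mdisc N) ;; A)"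
    unfolding pr_def using tens_disc_r[of A N] a by simp
  also have "\<dots> = (mcopy N ;; (mid N \<otimes> mdisc N)) ;; A"
    using a by (simp add: m_comp_assoc)
  also have "\<dots> = A" using a by (simp add: copy_counit_r)
  finally show ?thesis .
qed

lemma pr_disc_left: "mdom A = N \<Longrightarrow> pr N (mdisc N) A = A"
proof -
  assume a: "mdom A = N"
  have "pr N (mdisc N) A = mcopy N ;; ((mdisc N \<otimes> mid N) ;; A)"
    unfolding pr_def using tens_disc_l[of N A] a by simp
  also have "\<dots> = (mcopy N ;; (mdisc N \<otimes> mid N)) ;; A"
    using a by (simp add: m_comp_assoc)
  also have "\<dots> = A" using a by (simp add: copy_counit_l)
  finally show ?thesis .
qed

lemma proj_split1: "j < p \<Longrightarrow> proj (p + q) j = proj p j \<otimes> mdisc q"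
proof -
  assume j: "j < p"
  have "p + q - Suc j = (p - Suc j) + q" using j by simp
  then show ?thesis unfolding proj_def by (simp add: m_tens_assoc mdisc_add)
qed

lemma proj_split2: "proj (p + q) (p + j) = mdisc p \<otimes> proj q j"
  unfolding proj_def by (simp add: m_tens_assoc mdisc_add)

lemma pr_proj1:
  assumes "mdom X = N" "mdom Y = N" "mcod X = p" "mcod Y = q" "j < p"
  shows "pr N X Y ;; proj (p + q) j = X ;; proj p j"
proof -
  have "pr N X Y ;; proj (p + q) j = pr N (X ;; proj p j) (Y ;; mdisc q)"
    using assms by (simp add: proj_split1 pr_post)
  also have "Y ;; mdisc q = mdisc N" using assms m_discard_natural[of Y] by simp
  finally show ?thesis using assms by (simp add: pr_disc_right)
qed

lemma pr_proj2:
  assumes "mdom X = N" "mdom Y = N" "mcod X = p" "mcod Y = q" "j < q"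
  shows "pr N X Y ;; proj (p + q) (p + j) = Y ;; proj q j"
proof -
  have "pr N X Y ;; proj (p + q) (p + j) = pr N (X ;; mdisc p) (Y ;; proj q j)"
    using assms by (simp add: proj_split2 pr_post)
  also have "X ;; mdisc p = mdisc N" using assms m_discard_natural[of X] by simp
  finally show ?thesis using assms by (simp add: pr_disc_left)
qed

lemma Tup_nat:
  "(\<forall>X\<in>set Xs. mdom X = mcod h) \<Longrightarrow> h ;; Tup (mcod h) Xs = Tup (mdom h) (map (\<lambda>X. h ;; X) Xs)"
proof (induction Xs)
  case Nil then show ?case by (simp add: m_discard_natural)
next
  case (Cons X Xs)
  then show ?case by (simp add: pr_nat)
qed

lemma proj_Suc: "j < n \<Longrightarrow> proj (Suc n) (Suc j) = (mgen Discard \<otimes> mid n) ;; proj n j"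
proof -
  assume j: "j < n"
  have "proj (Suc n) (Suc j) = proj (1 + n) (1 + j)" by simp
  also have "\<dots> = mdisc 1 \<otimes> proj n j" by (rule proj_split2)
  also have "\<dots> = (mdisc 1 \<otimes> mid n) ;; proj n j"
    using tens_disc_l[of 1 "proj n j"] j by simp
  finally show ?thesis by (simp add: mdisc_one)
qed

lemma pr_split_id: "pr (Suc n) (mid (Suc 0) \<otimes> mdisc n) (mgen Discard \<otimes> mid n) = mid (Suc n)"
proof -
  let ?W = "(mid 1 \<otimes> msw 1 n) \<otimes> mid n"
  let ?X = "(mid (Suc 0) \<otimes> mdisc n) \<otimes> (mgen Discard \<otimes> mid n)"
  have "?W ;; ?X = (mid 1 \<otimes> (msw 1 n \<otimes> mid n)) ;; (mid 1 \<otimes> ((mdisc n \<otimes> mgen Discard) \<otimes> mid n))"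
    by (simp add: m_tens_assoc[symmetric])
  also have "\<dots> = mid 1 \<otimes> ((msw 1 n ;; (mdisc n \<otimes> mgen Discard)) \<otimes> mid n)"
    by (simp add: m_interchange)
  also have "msw 1 n ;; (mdisc n \<otimes> mgen Discard) = mgen Discard \<otimes> mdisc n"
    using disc_unique[of "msw 1 n ;; (mdisc n \<otimes> mgen Discard)"] by (simp add: mdisc_simps)
  also have "mid 1 \<otimes> ((mgen Discard \<otimes> mdisc n) \<otimes> mid n) = (mid 1 \<otimes> mgen Discard) \<otimes> (mdisc n \<otimes> mid n)"
    by (simp add: m_tens_assoc)
  finally have WX: "?W ;; ?X = (mid 1 \<otimes> mgen Discard) \<otimes> (mdisc n \<otimes> mid n)" .
  have "pr (Suc n) (mid (Suc 0) \<otimes> mdisc n) (mgen Discard \<otimes> mid n) = (mgen Copy \<otimes> mcopy n) ;; (?W ;; ?X)"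
    unfolding pr_def by (simp add: mcopy_simps m_comp_assoc)
  also have "\<dots> = (mgen Copy ;; (mid 1 \<otimes> mgen Discard)) \<otimes> (mcopy n ;; (mdisc n \<otimes> mid n))"
    unfolding WX by (simp add: m_interchange)
  also have "\<dots> = mid (Suc n)"
    by (simp add: copy_counit_r1 copy_counit_l m_tens_id)
  finally show ?thesis .
qed

lemma Id_Tup: "mid n = Tup n (map (proj n) [0..<n])"
proof (induction n)
  case 0 then show ?case by (simp add: mdisc_simps)
next
  case (Suc n)
  let ?h = "mgen Discard \<otimes> mid n"
  have "map (proj (Suc n)) [0..<Suc n] = proj (Suc n) 0 # map (\<lambda>j. proj (Suc n) (Suc j)) [0..<n]"
    by (simp add: upt_conv_Cons map_Suc_upt[symmetric] del: upt_Suc)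
  also have "map (\<lambda>j. proj (Suc n) (Suc j)) [0..<n] = map (\<lambda>X. ?h ;; X) (map (proj n) [0..<n])"
    by (simp add: proj_Suc)
  finally have e: "map (proj (Suc n)) [0..<Suc n] = proj (Suc n) 0 # map (\<lambda>X. ?h ;; X) (map (proj n) [0..<n])" .
  have "Tup (Suc n) (map (\<lambda>X. ?h ;; X) (map (proj n) [0..<n])) = ?h ;; Tup n (map (proj n) [0..<n])"
    using Tup_nat[of "map (proj n) [0..<n]" ?h] by simp
  also have "\<dots> = ?h" by (simp flip: Suc.IH)
  finally have t: "Tup (Suc n) (map (\<lambda>X. ?h ;; X) (map (proj n) [0..<n])) = ?h" .
  have p0: "proj (Suc n) 0 = mid (Suc 0) \<otimes> mdisc n" by (simp add: proj_def mdisc_simps)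
  have "Tup (Suc n) (map (proj (Suc n)) [0..<Suc n]) = pr (Suc n) (proj (Suc n) 0) ?h"
    by (simp only: e Tup.simps t)
  then show ?case by (simp only: p0 pr_split_id)
qed

lemma ext_mor:
  assumes "mdom f = N" "mdom g = N" "mcod f = M" "mcod g = M"
    and "\<And>j. j < M \<Longrightarrow> f ;; proj M j = g ;; proj M j"
  shows "f = g"
proof -
  have "f = f ;; Tup M (map (proj M) [0..<M])" using assms by (simp flip: Id_Tup)
  also have "\<dots> = Tup N (map (\<lambda>X. f ;; X) (map (proj M) [0..<M]))"
    using Tup_nat[of "map (proj M) [0..<M]" f] assms by simp
  also have "map (\<lambda>X. f ;; X) (map (proj M) [0..<M]) = map (\<lambda>X. g ;; X) (map (proj M) [0..<M])"
    using assms(5) by simp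
  also have "Tup N (map (\<lambda>X. g ;; X) (map (proj M) [0..<M])) = g ;; Tup M (map (proj M) [0..<M])"
    using Tup_nat[of "map (proj M) [0..<M]" g] assms by simp
  also have "\<dots> = g" using assms by (simp flip: Id_Tup)
  finally show ?thesis .
qed

lemma sw_proj1: "j < b \<Longrightarrow> msw a b ;; proj (b + a) j = proj (a + b) (a + j)"
proof -
  assume j: "j < b"
  have "(mdisc a \<otimes> proj b j) ;; msw 0 (Suc 0) = msw a b ;; (proj b j \<otimes> mdisc a)"
    using m_sw_natural[of "mdisc a" "proj b j"] j by simp
  then show ?thesis using j by (simp add: proj_split1 proj_split2)
qed

lemma sw_proj2: "j < a \<Longrightarrow> msw a b ;; proj (b + a) (b + j) = proj (a + b) j"
proof -
  assume j: "j < a"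
  have "(proj a j \<otimes> mdisc b) ;; msw (Suc 0) 0 = msw a b ;; (mdisc b \<otimes> proj a j)"
    using m_sw_natural[of "proj a j" "mdisc b"] j by simp
  then show ?thesis using j by (simp add: proj_split1 proj_split2)
qed


lemma pr_swap:
  assumes a: "mdom A = N" "mdom B = N" "mcod A = p" "mcod B = q"
  shows "pr N A B ;; msw p q = pr N B A"
proof (rule ext_mor[where N = N and M = "q + p"])
  fix j assume j: "j < q + p"
  show "pr N A B ;; msw p q ;; proj (q + p) j = pr N B A ;; proj (q + p) j"
  proof (cases "j < q")
    case True
    have "pr N A B ;; msw p q ;; proj (q + p) j = pr N A B ;; (msw p q ;; proj (q + p) j)"
      using a True by (simp add: m_comp_assoc)
    also have "\<dots> = pr N A B ;; proj (p + q) (p + j)" using True by (simp add: sw_proj1)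
    also have "\<dots> = B ;; proj q j" by (rule pr_proj2) (use a True in auto)
    also have "\<dots> = pr N B A ;; proj (q + p) j" by (rule pr_proj1[symmetric]) (use a True in auto)
    finally show ?thesis .
  next
    case False
    then obtain i where i: "j = q + i" "i < p" using j by (metis add_diff_inverse_nat add_less_cancel_left)
    have "pr N A B ;; msw p q ;; proj (q + p) j = pr N A B ;; (msw p q ;; proj (q + p) (q + i))"
      using a i by (simp add: m_comp_assoc)
    also have "\<dots> = pr N A B ;; proj (p + q) i" using i by (simp add: sw_proj2)
    also have "\<dots> = A ;; proj p i" by (rule pr_proj1) (use a i in auto)
    also have "\<dots> = pr N B A ;; proj (q + p) (q + i)" by (rule pr_proj2[symmetric]) (use a i in auto)
    finally show ?thesis using i by simp
  qed
qed (use a in simp_all)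

lemma pr_assoc:
  assumes a: "mdom X = N" "mdom Y = N" "mdom Z = N" "mcod X = p" "mcod Y = q" "mcod Z = r"
  shows "pr N (pr N X Y) Z = pr N X (pr N Y Z)"
proof (rule ext_mor[where N = N and M = "p + q + r"])
  fix j assume j: "j < p + q + r"
  have e: "proj (p + q + r) k = proj (p + (q + r)) k" for k by (simp add: add.assoc)
  show "pr N (pr N X Y) Z ;; proj (p + q + r) j = pr N X (pr N Y Z) ;; proj (p + q + r) j"
  proof (cases "j < p + q")
    case True
    have L: "pr N (pr N X Y) Z ;; proj (p + q + r) j = pr N X Y ;; proj (p + q) j"
      by (rule pr_proj1) (use a True in auto)
    show ?thesis
    proof (cases "j < p")
      case True
      have "pr N X Y ;; proj (p + q) j = X ;; proj p j" by (rule pr_proj1) (use a True in auto)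
      moreover have "pr N X (pr N Y Z) ;; proj (p + (q + r)) j = X ;; proj p j"
        by (rule pr_proj1) (use a True in auto)
      ultimately show ?thesis using L e by simp
    next
      case False
      then obtain i where i: "j = p + i" "i < q" using \<open>j < p + q\<close>
        by (metis add_diff_inverse_nat add_less_cancel_left)
      have "pr N X Y ;; proj (p + q) (p + i) = Y ;; proj q i" by (rule pr_proj2) (use a i in auto)
      moreover have "pr N X (pr N Y Z) ;; proj (p + (q + r)) (p + i) = pr N Y Z ;; proj (q + r) i"
        by (rule pr_proj2) (use a i in auto)
      moreover have "pr N Y Z ;; proj (q + r) i = Y ;; proj q i"
        by (rule pr_proj1) (use a i in auto)
      ultimately show ?thesis using L e i by simp
    qed
  next
    case False
    then obtain i where i: "j = p + q + i" "i < r" using j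
      by (metis add_diff_inverse_nat add_less_cancel_left)
    have "pr N (pr N X Y) Z ;; proj (p + q + r) (p + q + i) = Z ;; proj r i"
      by (rule pr_proj2) (use a i in auto)
    moreover have "pr N X (pr N Y Z) ;; proj (p + (q + r)) (p + (q + i)) = pr N Y Z ;; proj (q + r) (q + i)"
      by (rule pr_proj2) (use a i in auto)
    moreover have "pr N Y Z ;; proj (q + r) (q + i) = Z ;; proj r i"
      by (rule pr_proj2) (use a i in auto)
    ultimately show ?thesis using i e by (simp add: add.assoc)
  qed
qed (use a in simp_all)

lemma pr_copy: "mcod A = Suc 0 \<Longrightarrow> mdom A = N \<Longrightarrow> A ;; mgen Copy = pr N A A"
  using m_copy_natural[of A] by (simp add: mcopy_one pr_def)

section \<open>Ring operations at a fixed arity\<close>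

definition plusC :: "nat \<Rightarrow> mor \<Rightarrow> mor \<Rightarrow> mor" where "plusC N A B = pr N A B ;; mgen Add"
definition mulC :: "nat \<Rightarrow> mor \<Rightarrow> mor \<Rightarrow> mor" where "mulC N A B = pr N A B ;; mgen And"
definition zeroC :: "nat \<Rightarrow> mor" where "zeroC N = mdisc N ;; mgen Zero"
definition oneC :: "nat \<Rightarrow> mor" where "oneC N = mdisc N ;; mgen One"

lemma plusC_dc [simp]: "mdom A = N \<Longrightarrow> mdom B = N \<Longrightarrow> mcod A = Suc 0 \<Longrightarrow> mcod B = Suc 0 \<Longrightarrow>
   mdom (plusC N A B) = N \<and> mcod (plusC N A B) = Suc 0"
  by (simp add: plusC_def)
lemma mulC_dc [simp]: "mdom A = N \<Longrightarrow> mdom B = N \<Longrightarrow> mcod A = Suc 0 \<Longrightarrow> mcod B = Suc 0 \<Longrightarrow>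
   mdom (mulC N A B) = N \<and> mcod (mulC N A B) = Suc 0"
  by (simp add: mulC_def)
lemma zeroC_dc [simp]: "mdom (zeroC N) = N" "mcod (zeroC N) = Suc 0"
  by (simp_all add: zeroC_def)
lemma oneC_dc [simp]: "mdom (oneC N) = N" "mcod (oneC N) = Suc 0"
  by (simp_all add: oneC_def)

locale ar =
  fixes N :: nat and A B C :: mor
  assumes dA: "mdom A = N" and dB: "mdom B = N" and dC: "mdom C = N"
    and cA: "mcod A = Suc 0" and cB: "mcod B = Suc 0" and cC: "mcod C = Suc 0"
begin

lemmas dc = dA dB dC cA cB cC

lemma comm_gen:
  assumes "msigma ;; g = g" "mdom g = 2"
  shows "pr N A B ;; g = pr N B A ;; g"
proof -
  have "pr N A B ;; g = pr N A B ;; (msigma ;; g)" using assms by simp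
  also have "\<dots> = (pr N A B ;; msw (Suc 0) (Suc 0)) ;; g"
    using dc assms by (simp add: m_comp_assoc)
  also have "\<dots> = pr N B A ;; g" using dc by (simp add: pr_swap)
  finally show ?thesis .
qed

lemma assoc_gen:
  assumes "mtens g (mid 1) ;; g = mtens (mid 1) g ;; g" "mdom g = 2" "mcod g = 1"
  shows "pr N (pr N A B ;; g) C ;; g = pr N A (pr N B C ;; g) ;; g"
proof -
  have "pr N (pr N A B ;; g) C = pr N (pr N A B) C ;; (g \<otimes> mid 1)"
    using dc assms by (simp add: pr_post)
  then have "pr N (pr N A B ;; g) C ;; g = pr N (pr N A B) C ;; ((g \<otimes> mid 1) ;; g)"
    using dc assms by (simp add: m_comp_assoc)
  also have "\<dots> = pr N A (pr N B C) ;; ((mid 1 \<otimes> g) ;; g)"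
    using dc assms by (simp add: pr_assoc)
  also have "\<dots> = (pr N A (pr N B C) ;; (mid 1 \<otimes> g)) ;; g"
    using dc assms by (simp add: m_comp_assoc)
  also have "pr N A (pr N B C) ;; (mid 1 \<otimes> g) = pr N A (pr N B C ;; g)"
    using dc assms by (simp add: pr_post)
  finally show ?thesis .
qed

lemma unit_gen:
  assumes "mtens u (mid 1) ;; g = mid 1" "mdom u = 0" "mcod u = 1" "mdom g = 2" "mcod g = 1"
  shows "pr N (mdisc N ;; u) A ;; g = A"
proof -
  have "pr N (mdisc N ;; u) A = pr N (mdisc N) A ;; (u \<otimes> mid 1)"
    using dc assms by (simp add: pr_post)
  then have "pr N (mdisc N ;; u) A ;; g = pr N (mdisc N) A ;; ((u \<otimes> mid 1) ;; g)"
    using dc assms by (simp add: m_comp_assoc)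
  also have "\<dots> = A" using dc assms by (simp add: pr_disc_left)
  finally show ?thesis .
qed

lemma add_comm: "plusC N A B = plusC N B A"
  unfolding plusC_def by (rule comm_gen) (simp_all add: m_add_comm)
lemma mul_comm: "mulC N A B = mulC N B A"
  unfolding mulC_def by (rule comm_gen) (simp_all add: m_and_comm)
lemma add_assoc: "plusC N (plusC N A B) C = plusC N A (plusC N B C)"
  unfolding plusC_def by (rule assoc_gen) (simp_all add: m_add_assoc)
lemma mul_assoc: "mulC N (mulC N A B) C = mulC N A (mulC N B C)"
  unfolding mulC_def by (rule assoc_gen) (simp_all add: m_and_assoc)
lemma add_zero: "plusC N (zeroC N) A = A"
  unfolding plusC_def zeroC_def by (rule unit_gen) (simp_all add: m_add_unit_left)
lemma mul_one: "mulC N (oneC N) A = A"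
  unfolding mulC_def oneC_def by (rule unit_gen) (simp_all add: m_and_unit_left)

lemma add_self: "plusC N A A = zeroC N"
proof -
  have "plusC N A A = (A ;; mgen Copy) ;; mgen Add"
    unfolding plusC_def using dc by (simp add: pr_copy)
  also have "\<dots> = (A ;; mgen Discard) ;; mgen Zero"
    using dc by (simp add: m_comp_assoc m_copy_add)
  also have "A ;; mgen Discard = mdisc N"
    using m_discard_natural[of A] dc by (simp add: mdisc_one)
  finally show ?thesis by (simp add: zeroC_def)
qed

lemma distrib: "mulC N A (plusC N B C) = plusC N (mulC N A B) (mulC N A C)"
proof -
  let ?T = "pr N A (pr N B C)"
  let ?S = "(mid 1 \<otimes> msigma) \<otimes> mid 1"
  have 1: "pr N A (pr N B C ;; mgen Add) = ?T ;; (mid 1 \<otimes> mgen Add)"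
    using dc by (simp add: pr_post)
  have "mulC N A (plusC N B C) = ?T ;; ((mid 1 \<otimes> mgen Add) ;; mgen And)"
    unfolding mulC_def plusC_def 1 using dc by (simp add: m_comp_assoc)
  also have "\<dots> = ?T ;; ((((mgen Copy \<otimes> mid 2) ;; ?S) ;; (mgen And \<otimes> mgen And)) ;; mgen Add)"
    by (simp add: m_distrib)
  also have "\<dots> = (((?T ;; (mgen Copy \<otimes> mid 2)) ;; ?S) ;; (mgen And \<otimes> mgen And)) ;; mgen Add"
    using dc by (simp add: m_comp_assoc)
  also have "?T ;; (mgen Copy \<otimes> mid 2) = pr N (pr N A A) (pr N B C)"
    using dc by (simp add: pr_post pr_copy)
  also have "\<dots> = pr N (pr N (pr N A A) B) C"
    using dc by (simp add: pr_assoc)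
  also have "\<dots> ;; ?S = pr N (pr N (pr N A A) B ;; (mid 1 \<otimes> msigma)) C"
    using dc by (simp add: pr_post)
  also have "pr N (pr N A A) B ;; (mid 1 \<otimes> msigma) = pr N (pr N A B) A"
  proof -
    have "pr N (pr N A A) B ;; (mid 1 \<otimes> msigma) = pr N A (pr N A B) ;; (mid 1 \<otimes> msigma)"
      using dc by (simp add: pr_assoc)
    also have "\<dots> = pr N A (pr N A B ;; msigma)" using dc by (simp add: pr_post)
    also have "pr N A B ;; msigma = pr N B A" using dc by (simp add: pr_swap)
    also have "pr N A (pr N B A) = pr N (pr N A B) A" using dc by (simp add: pr_assoc)
    finally show ?thesis .
  qed
  also have "pr N (pr N (pr N A B) A) C = pr N (pr N A B) (pr N A C)"
    using dc by (simp add: pr_assoc)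
  also have "\<dots> ;; (mgen And \<otimes> mgen And) = pr N (mulC N A B) (mulC N A C)"
    using dc by (simp add: pr_post mulC_def)
  finally show ?thesis by (simp add: plusC_def)
qed

end

lemma plusC_nat:
  assumes "mdom A = mcod h" "mdom B = mcod h" "mcod A = Suc 0" "mcod B = Suc 0"
  shows "h ;; plusC (mcod h) A B = plusC (mdom h) (h ;; A) (h ;; B)"
proof -
  have "h ;; plusC (mcod h) A B = (h ;; pr (mcod h) A B) ;; mgen Add"
    unfolding plusC_def using assms by (simp add: m_comp_assoc)
  then show ?thesis using assms by (simp add: pr_nat plusC_def)
qed

lemma mulC_nat:
  assumes "mdom A = mcod h" "mdom B = mcod h" "mcod A = Suc 0" "mcod B = Suc 0"
  shows "h ;; mulC (mcod h) A B = mulC (mdom h) (h ;; A) (h ;; B)"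
proof -
  have "h ;; mulC (mcod h) A B = (h ;; pr (mcod h) A B) ;; mgen And"
    unfolding mulC_def using assms by (simp add: m_comp_assoc)
  then show ?thesis using assms by (simp add: pr_nat mulC_def)
qed

lemma zeroC_nat: "h ;; zeroC (mcod h) = zeroC (mdom h)"
  unfolding zeroC_def by (simp add: m_comp_assoc[symmetric] m_discard_natural)

lemma oneC_nat: "h ;; oneC (mcod h) = oneC (mdom h)"
  unfolding oneC_def by (simp add: m_comp_assoc[symmetric] m_discard_natural)


section \<open>Padding and the ring of one-output morphisms\<close>

definition wk :: "nat \<Rightarrow> nat \<Rightarrow> mor" where "wk a k = mid a \<otimes> mdisc k"
definition pad :: "nat \<Rightarrow> mor \<Rightarrow> mor" where "pad n X = wk (mdom X) (n - mdom X) ;; X"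

lemma wk_dom [simp]: "mdom (wk a k) = a + k" and wk_cod [simp]: "mcod (wk a k) = a"
  by (simp_all add: wk_def)

lemma pad_dom [simp]: "mdom X \<le> n \<Longrightarrow> mdom (pad n X) = n"
  by (simp add: pad_def)
lemma pad_cod [simp]: "mcod (pad n X) = mcod X"
  by (simp add: pad_def)

lemma pad_self [simp]: "pad (mdom X) X = X"
  by (simp add: pad_def wk_def mdisc_simps)

lemma wk_wk: "wk (a + k) j ;; wk a k = wk a (k + j)"
proof -
  have "wk (a + k) j ;; wk a k = (mid a \<otimes> (mid k \<otimes> mdisc j)) ;; (mid a \<otimes> mdisc k)"
    by (simp add: wk_def m_tens_id[symmetric] m_tens_assoc)
  also have "\<dots> = mid a \<otimes> ((mid k \<otimes> mdisc j) ;; mdisc k)"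
    by (simp add: m_interchange)
  also have "(mid k \<otimes> mdisc j) ;; mdisc k = mdisc (k + j)"
    using disc_unique[of "(mid k \<otimes> mdisc j) ;; mdisc k"] by simp
  finally show ?thesis by (simp add: wk_def)
qed

lemma pad_pad: "mdom X \<le> m \<Longrightarrow> m \<le> n \<Longrightarrow> pad n (pad m X) = pad n X"
proof -
  assume a: "mdom X \<le> m" "m \<le> n"
  let ?d = "mdom X"
  have "pad n (pad m X) = wk m (n - m) ;; (wk ?d (m - ?d) ;; X)"
    using a by (simp add: pad_def)
  also have "\<dots> = (wk (?d + (m - ?d)) (n - m) ;; wk ?d (m - ?d)) ;; X"
    using a by (simp add: m_comp_assoc)
  also have "\<dots> = wk ?d ((m - ?d) + (n - m)) ;; X" by (simp only: wk_wk)
  also have "\<dots> = pad n X" using a by (simp add: pad_def)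
  finally show ?thesis .
qed

fun zeros :: "nat \<Rightarrow> mor" where
  "zeros 0 = mid 0"
| "zeros (Suc k) = mgen Zero \<otimes> zeros k"

lemma zeros_dc [simp]: "mdom (zeros k) = 0" "mcod (zeros k) = k"
  by (induction k) auto

lemma pad_cancel:
  assumes "mdom X = d" "mdom Y = d" "d \<le> n" "pad n X = pad n Y"
  shows "X = Y"
proof -
  let ?k = "n - d"
  let ?s = "mid d \<otimes> zeros ?k"
  have sw: "?s ;; wk d ?k = mid d"
  proof -
    have "?s ;; wk d ?k = mid d \<otimes> (zeros ?k ;; mdisc ?k)"
      by (simp add: wk_def m_interchange)
    also have "zeros ?k ;; mdisc ?k = mid 0"
      using disc_unique[of "zeros ?k ;; mdisc ?k"] by (simp add: mdisc_simps)
    finally show ?thesis by simp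
  qed
  have "?s ;; pad n X = X"
    using assms(1-3) by (simp add: pad_def m_comp_assoc[symmetric] sw)
  moreover have "?s ;; pad n Y = Y"
    using assms(1-3) by (simp add: pad_def m_comp_assoc[symmetric] sw)
  ultimately show ?thesis using assms(4) by metis
qed

definition rrel :: "mor \<Rightarrow> mor \<Rightarrow> bool" where
  "rrel X Y \<longleftrightarrow> mcod X = Suc 0 \<and> mcod Y = Suc 0 \<and>
     pad (max (mdom X) (mdom Y)) X = pad (max (mdom X) (mdom Y)) Y"

lemma rrel_pad:
  assumes "rrel X Y" "mdom X \<le> n" "mdom Y \<le> n"
  shows "pad n X = pad n Y"
proof -
  let ?M = "max (mdom X) (mdom Y)"
  have "pad n X = pad n (pad ?M X)" using assms by (simp add: pad_pad)
  also have "\<dots> = pad n (pad ?M Y)" using assms(1) by (simp add: rrel_def)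
  also have "\<dots> = pad n Y" using assms by (simp add: pad_pad)
  finally show ?thesis .
qed

lemma rrel_intro:
  assumes "mcod X = Suc 0" "mcod Y = Suc 0" "mdom X \<le> n" "mdom Y \<le> n" "pad n X = pad n Y"
  shows "rrel X Y"
proof -
  let ?M = "max (mdom X) (mdom Y)"
  have "pad n (pad ?M X) = pad n (pad ?M Y)" using assms by (simp add: pad_pad)
  then have "pad ?M X = pad ?M Y"
    by (rule pad_cancel[where d = ?M, rotated 3]) (use assms in auto)
  then show ?thesis using assms by (simp add: rrel_def)
qed

lemma rrel_refl: "mcod X = Suc 0 \<Longrightarrow> rrel X X"
  by (simp add: rrel_def)

lemma rrel_part_equivp: "part_equivp rrel"
proof (rule part_equivpI)
  show "\<exists>x. rrel x x" by (rule exI[of _ "mgen Zero"]) (simp add: rrel_def)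
  show "symp rrel" by (rule sympI) (auto simp: rrel_def max.commute)
  show "transp rrel"
  proof (rule transpI)
    fix X Y Z assume a: "rrel X Y" "rrel Y Z"
    let ?n = "max (mdom X) (max (mdom Y) (mdom Z))"
    have "pad ?n X = pad ?n Y" by (rule rrel_pad[OF a(1)]) auto
    also have "\<dots> = pad ?n Z" by (rule rrel_pad[OF a(2)]) auto
    finally show "rrel X Z" using a by (intro rrel_intro[of _ _ ?n]) (auto simp: rrel_def)
  qed
qed

definition plusR :: "mor \<Rightarrow> mor \<Rightarrow> mor" where
  "plusR X Y = plusC (max (mdom X) (mdom Y)) (pad (max (mdom X) (mdom Y)) X) (pad (max (mdom X) (mdom Y)) Y)"
definition mulR :: "mor \<Rightarrow> mor \<Rightarrow> mor" where
  "mulR X Y = mulC (max (mdom X) (mdom Y)) (pad (max (mdom X) (mdom Y)) X) (pad (max (mdom X) (mdom Y)) Y)"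

lemma plusR_dc: "mcod X = Suc 0 \<Longrightarrow> mcod Y = Suc 0 \<Longrightarrow> mdom (plusR X Y) = max (mdom X) (mdom Y) \<and> mcod (plusR X Y) = Suc 0"
  unfolding plusR_def by (rule plusC_dc) auto
lemma mulR_dc: "mcod X = Suc 0 \<Longrightarrow> mcod Y = Suc 0 \<Longrightarrow> mdom (mulR X Y) = max (mdom X) (mdom Y) \<and> mcod (mulR X Y) = Suc 0"
  unfolding mulR_def by (rule mulC_dc) auto

lemma pad_plusC:
  assumes "mdom A = M" "mdom B = M" "mcod A = Suc 0" "mcod B = Suc 0" "M \<le> n"
  shows "pad n (plusC M A B) = plusC n (pad n A) (pad n B)"
proof -
  have "pad n (plusC M A B) = wk M (n - M) ;; plusC (mcod (wk M (n - M))) A B"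
    using assms by (simp add: pad_def)
  also have "\<dots> = plusC (mdom (wk M (n - M))) (wk M (n - M) ;; A) (wk M (n - M) ;; B)"
    by (rule plusC_nat) (use assms in simp_all)
  finally show ?thesis using assms by (simp add: pad_def)
qed

lemma pad_mulC:
  assumes "mdom A = M" "mdom B = M" "mcod A = Suc 0" "mcod B = Suc 0" "M \<le> n"
  shows "pad n (mulC M A B) = mulC n (pad n A) (pad n B)"
proof -
  have "pad n (mulC M A B) = wk M (n - M) ;; mulC (mcod (wk M (n - M))) A B"
    using assms by (simp add: pad_def)
  also have "\<dots> = mulC (mdom (wk M (n - M))) (wk M (n - M) ;; A) (wk M (n - M) ;; B)"
    by (rule mulC_nat) (use assms in simp_all)
  finally show ?thesis using assms by (simp add: pad_def)
qed

lemma pad_plusR: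
  assumes "mcod X = Suc 0" "mcod Y = Suc 0" "mdom X \<le> n" "mdom Y \<le> n"
  shows "pad n (plusR X Y) = plusC n (pad n X) (pad n Y)"
  unfolding plusR_def using assms by (simp add: pad_plusC pad_pad)

lemma pad_mulR:
  assumes "mcod X = Suc 0" "mcod Y = Suc 0" "mdom X \<le> n" "mdom Y \<le> n"
  shows "pad n (mulR X Y) = mulC n (pad n X) (pad n Y)"
  unfolding mulR_def using assms by (simp add: pad_mulC pad_pad)

lemma pad_Zero: "pad n (mgen Zero) = zeroC n"
  by (simp add: pad_def wk_def zeroC_def)
lemma pad_One: "pad n (mgen One) = oneC n"
  by (simp add: pad_def wk_def oneC_def)

quotient_type R = mor / partial: rrel
  morphisms rep_R abs_R
  by (rule rrel_part_equivp)

lemma ar_pad: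
  assumes "mcod a = Suc 0" "mcod b = Suc 0" "mcod c = Suc 0" "mdom a \<le> n" "mdom b \<le> n" "mdom c \<le> n"
  shows "ar n (pad n a) (pad n b) (pad n c)"
  using assms by unfold_locales simp_all

lemma rrel_cod: "rrel X Y \<Longrightarrow> mcod X = Suc 0 \<and> mcod Y = Suc 0"
  by (simp add: rrel_def)

lemma plusR_respect: "rrel X X' \<Longrightarrow> rrel Y Y' \<Longrightarrow> rrel (plusR X Y) (plusR X' Y')"
proof -
  assume a: "rrel X X'" "rrel Y Y'"
  let ?n = "mdom X + mdom X' + mdom Y + mdom Y'"
  have c: "mcod X = Suc 0" "mcod X' = Suc 0" "mcod Y = Suc 0" "mcod Y' = Suc 0"
    using a by (auto simp: rrel_def)
  have "pad ?n (plusR X Y) = plusC ?n (pad ?n X) (pad ?n Y)" using c by (simp add: pad_plusR)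
  also have "\<dots> = plusC ?n (pad ?n X') (pad ?n Y')"
    using rrel_pad[OF a(1), of ?n] rrel_pad[OF a(2), of ?n] by simp
  also have "\<dots> = pad ?n (plusR X' Y')" using c by (simp add: pad_plusR)
  finally show ?thesis using c by (intro rrel_intro[of _ _ ?n]) (simp_all add: plusR_dc max_def)
qed

lemma mulR_respect: "rrel X X' \<Longrightarrow> rrel Y Y' \<Longrightarrow> rrel (mulR X Y) (mulR X' Y')"
proof -
  assume a: "rrel X X'" "rrel Y Y'"
  let ?n = "mdom X + mdom X' + mdom Y + mdom Y'"
  have c: "mcod X = Suc 0" "mcod X' = Suc 0" "mcod Y = Suc 0" "mcod Y' = Suc 0"
    using a by (auto simp: rrel_def)
  have "pad ?n (mulR X Y) = mulC ?n (pad ?n X) (pad ?n Y)" using c by (simp add: pad_mulR)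
  also have "\<dots> = mulC ?n (pad ?n X') (pad ?n Y')"
    using rrel_pad[OF a(1), of ?n] rrel_pad[OF a(2), of ?n] by simp
  also have "\<dots> = pad ?n (mulR X' Y')" using c by (simp add: pad_mulR)
  finally show ?thesis using c by (intro rrel_intro[of _ _ ?n]) (simp_all add: mulR_dc max_def)
qed

lemma rrel_cods: "rrel a a \<Longrightarrow> mcod a = Suc 0" by (simp add: rrel_def)

lemma raw_add_assoc:
  assumes "rrel a a" "rrel b b" "rrel c c"
  shows "rrel (plusR (plusR a b) c) (plusR a (plusR b c))"
proof -
  have cods: "mcod a = Suc 0" "mcod b = Suc 0" "mcod c = Suc 0" using assms by (simp_all add: rrel_cods)
  let ?n = "mdom a + mdom b + mdom c"
  interpret X: ar ?n "pad ?n a" "pad ?n b" "pad ?n c" by (rule ar_pad) (simp_all add: cods)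
  show ?thesis
    by (rule rrel_intro[of _ _ ?n]) (simp_all add: cods plusR_dc pad_plusR max_def X.add_assoc)
qed

lemma raw_mul_assoc:
  assumes "rrel a a" "rrel b b" "rrel c c"
  shows "rrel (mulR (mulR a b) c) (mulR a (mulR b c))"
proof -
  have cods: "mcod a = Suc 0" "mcod b = Suc 0" "mcod c = Suc 0" using assms by (simp_all add: rrel_cods)
  let ?n = "mdom a + mdom b + mdom c"
  interpret X: ar ?n "pad ?n a" "pad ?n b" "pad ?n c" by (rule ar_pad) (simp_all add: cods)
  show ?thesis
    by (rule rrel_intro[of _ _ ?n]) (simp_all add: cods mulR_dc pad_mulR max_def X.mul_assoc)
qed

lemma raw_add_comm:
  assumes "rrel a a" "rrel b b"
  shows "rrel (plusR a b) (plusR b a)"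
proof -
  have cods: "mcod a = Suc 0" "mcod b = Suc 0" using assms by (simp_all add: rrel_cods)
  let ?n = "mdom a + mdom b"
  interpret X: ar ?n "pad ?n a" "pad ?n b" "pad ?n b" by (rule ar_pad) (simp_all add: cods)
  show ?thesis
    by (rule rrel_intro[of _ _ ?n]) (simp_all add: cods plusR_dc pad_plusR max_def X.add_comm)
qed

lemma raw_mul_comm:
  assumes "rrel a a" "rrel b b"
  shows "rrel (mulR a b) (mulR b a)"
proof -
  have cods: "mcod a = Suc 0" "mcod b = Suc 0" using assms by (simp_all add: rrel_cods)
  let ?n = "mdom a + mdom b"
  interpret X: ar ?n "pad ?n a" "pad ?n b" "pad ?n b" by (rule ar_pad) (simp_all add: cods)
  show ?thesis
    by (rule rrel_intro[of _ _ ?n]) (simp_all add: cods mulR_dc pad_mulR max_def X.mul_comm)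
qed

lemma raw_add_zero:
  assumes "rrel a a"
  shows "rrel (plusR (mgen Zero) a) a"
proof -
  have cods: "mcod a = Suc 0" using assms by (simp_all add: rrel_cods)
  interpret X: ar "mdom a" a a a by unfold_locales (simp_all add: cods)
  show ?thesis
    by (rule rrel_intro[of _ _ "mdom a"]) (simp_all add: cods plusR_dc pad_plusR pad_Zero X.add_zero)
qed

lemma raw_mul_one:
  assumes "rrel a a"
  shows "rrel (mulR (mgen One) a) a"
proof -
  have cods: "mcod a = Suc 0" using assms by (simp_all add: rrel_cods)
  interpret X: ar "mdom a" a a a by unfold_locales (simp_all add: cods)
  show ?thesis
    by (rule rrel_intro[of _ _ "mdom a"]) (simp_all add: cods mulR_dc pad_mulR pad_One X.mul_one)
qed

lemma raw_add_self:
  assumes "rrel a a"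
  shows "rrel (plusR a a) (mgen Zero)"
proof -
  have cods: "mcod a = Suc 0" using assms by (simp_all add: rrel_cods)
  interpret X: ar "mdom a" a a a by unfold_locales (simp_all add: cods)
  show ?thesis
    by (rule rrel_intro[of _ _ "mdom a"]) (simp_all add: cods plusR_dc pad_plusR pad_Zero X.add_self)
qed

lemma raw_distrib:
  assumes "rrel a a" "rrel b b" "rrel c c"
  shows "rrel (mulR (plusR a b) c) (plusR (mulR a c) (mulR b c))"
proof -
  have cods: "mcod a = Suc 0" "mcod b = Suc 0" "mcod c = Suc 0" using assms by (simp_all add: rrel_cods)
  let ?n = "mdom a + mdom b + mdom c"
  have d: "mulC ?n (plusC ?n (pad ?n a) (pad ?n b)) (pad ?n c) = plusC ?n (mulC ?n (pad ?n a) (pad ?n c)) (mulC ?n (pad ?n b) (pad ?n c))"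
  proof -
    interpret X: ar ?n "pad ?n c" "pad ?n a" "pad ?n b" by (rule ar_pad) (simp_all add: cods le_max_iff_disj)
    interpret Y: ar ?n "plusC ?n (pad ?n a) (pad ?n b)" "pad ?n c" "pad ?n c"
      by unfold_locales (simp_all add: cods le_max_iff_disj)
    interpret Z: ar ?n "pad ?n a" "pad ?n c" "pad ?n c" by (rule ar_pad) (simp_all add: cods le_max_iff_disj)
    interpret W: ar ?n "pad ?n b" "pad ?n c" "pad ?n c" by (rule ar_pad) (simp_all add: cods le_max_iff_disj)
    show ?thesis by (simp add: Y.mul_comm X.distrib Z.mul_comm W.mul_comm)
  qed
  show ?thesis
    by (rule rrel_intro[of _ _ ?n]) (simp_all add: cods mulR_dc plusR_dc pad_plusR pad_mulR d max_def)
qed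

lemma minterp_mgen [simp]: "minterp (mgen x) = ginterp x"
  by transfer simp

instantiation R :: comm_ring_1
begin

lift_definition zero_R :: R is "mgen Zero" by (simp add: rrel_refl)
lift_definition one_R :: R is "mgen One" by (simp add: rrel_refl)
lift_definition plus_R :: "R \<Rightarrow> R \<Rightarrow> R" is plusR by (rule plusR_respect)
lift_definition minus_R :: "R \<Rightarrow> R \<Rightarrow> R" is plusR by (rule plusR_respect)
lift_definition times_R :: "R \<Rightarrow> R \<Rightarrow> R" is mulR by (rule mulR_respect)
lift_definition uminus_R :: "R \<Rightarrow> R" is "\<lambda>X. X" by simp

instance
proof
  fix a b c :: R
  show "a + b + c = a + (b + c)" by transfer (rule raw_add_assoc)
  show "a + b = b + a" by transfer (rule raw_add_comm)
  show "0 + a = a" by transfer (rule raw_add_zero)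
  show "- a + a = 0" by transfer (rule raw_add_self)
  show "a - b = a + - b" by transfer (rule plusR_respect)
  show "a * b * c = a * (b * c)" by transfer (rule raw_mul_assoc)
  show "a * b = b * a" by transfer (rule raw_mul_comm)
  show "1 * a = a" by transfer (auto intro!: raw_mul_one simp: rrel_refl)
  show "(a + b) * c = a * c + b * c" by transfer (rule raw_distrib)
  show "(0::R) \<noteq> 1"
  proof transfer
    show "\<not> rrel (mgen Zero) (mgen One)"
    proof
      assume "rrel (mgen Zero) (mgen One)"
      then have "mgen Zero = mgen One" by (simp add: rrel_def pad_Zero pad_One zeroC_def oneC_def mdisc_simps)
      then have "minterp (mgen Zero) = minterp (mgen One)" by simp
      then show False by simp
    qed
  qed
qed

end

instance R :: char2
proof
  show "(1::R) + 1 = 0" by transfer (rule raw_add_self, simp add: rrel_refl)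
qed


lemma pad_id [simp]: "mdom X = n \<Longrightarrow> pad n X = X"
  by auto

lemma prod_list_distinct: "distinct xs \<Longrightarrow> prod_list (map f xs) = prod f (set xs)"
  by (induction xs) simp_all

lemma R_rel_iff: "rrel X X \<Longrightarrow> rrel Y Y \<Longrightarrow> abs_R X = abs_R Y \<longleftrightarrow> rrel X Y"
  using Quotient_rel[OF Quotient_R] by blast

lemma cls_eq:
  assumes "mcod X = Suc 0" "mcod Y = Suc 0" "mdom X = mdom Y" "abs_R X = abs_R Y"
  shows "X = Y"
proof -
  have "rrel X Y" using assms R_rel_iff[of X Y] by (simp add: rrel_refl)
  then show ?thesis using assms(3) by (simp add: rrel_def del: pad_id) (metis pad_self)
qed

lemma cls_plusC:
  assumes "mdom A = n" "mdom B = n" "mcod A = Suc 0" "mcod B = Suc 0"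
  shows "abs_R (plusC n A B) = abs_R A + abs_R B"
proof -
  have "abs_R A + abs_R B = abs_R (plusR A B)"
    using assms by (simp add: plus_R.abs_eq rrel_refl)
  also have "plusR A B = plusC n A B" using assms by (simp add: plusR_def)
  finally show ?thesis by simp
qed

lemma cls_mulC:
  assumes "mdom A = n" "mdom B = n" "mcod A = Suc 0" "mcod B = Suc 0"
  shows "abs_R (mulC n A B) = abs_R A * abs_R B"
proof -
  have "abs_R A * abs_R B = abs_R (mulR A B)"
    using assms by (simp add: times_R.abs_eq rrel_refl)
  also have "mulR A B = mulC n A B" using assms by (simp add: mulR_def)
  finally show ?thesis by simp
qed

lemma cls_pad:
  assumes "mcod X = Suc 0" "mdom X \<le> n"
  shows "abs_R (pad n X) = abs_R X"
proof -
  have "rrel (pad n X) X"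
    by (rule rrel_intro[of _ _ n]) (use assms in \<open>simp_all add: pad_pad\<close>)
  then show ?thesis using assms by (simp add: R_rel_iff rrel_refl)
qed

lemma cls_zeroC: "abs_R (zeroC n) = 0"
proof -
  have "rrel (zeroC n) (mgen Zero)"
    by (rule rrel_intro[of _ _ n]) (simp_all add: pad_Zero)
  then show ?thesis by (simp add: R_rel_iff rrel_refl zero_R.abs_eq)
qed

lemma cls_oneC: "abs_R (oneC n) = 1"
proof -
  have "rrel (oneC n) (mgen One)"
    by (rule rrel_intro[of _ _ n]) (simp_all add: pad_One)
  then show ?thesis by (simp add: R_rel_iff rrel_refl one_R.abs_eq)
qed

fun sumL :: "nat \<Rightarrow> mor list \<Rightarrow> mor" where
  "sumL n [] = zeroC n"
| "sumL n (X # Xs) = plusC n X (sumL n Xs)"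

fun prodL :: "nat \<Rightarrow> mor list \<Rightarrow> mor" where
  "prodL n [] = oneC n"
| "prodL n (X # Xs) = mulC n X (prodL n Xs)"

definition okL :: "nat \<Rightarrow> mor list \<Rightarrow> bool" where
  "okL n Xs \<longleftrightarrow> (\<forall>X\<in>set Xs. mdom X = n \<and> mcod X = Suc 0)"

lemma okL_simps [simp]: "okL n [] = True" "okL n (X # Xs) = (mdom X = n \<and> mcod X = Suc 0 \<and> okL n Xs)"
  by (auto simp: okL_def)

lemma sumL_dc: "okL n Xs \<Longrightarrow> mdom (sumL n Xs) = n \<and> mcod (sumL n Xs) = Suc 0"
  by (induction Xs) auto
lemma prodL_dc: "okL n Xs \<Longrightarrow> mdom (prodL n Xs) = n \<and> mcod (prodL n Xs) = Suc 0"
  by (induction Xs) auto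

lemma cls_sumL: "okL n Xs \<Longrightarrow> abs_R (sumL n Xs) = sum_list (map abs_R Xs)"
  by (induction Xs) (auto simp: cls_zeroC cls_plusC sumL_dc)
lemma cls_prodL: "okL n Xs \<Longrightarrow> abs_R (prodL n Xs) = prod_list (map abs_R Xs)"
  by (induction Xs) (auto simp: cls_oneC cls_mulC prodL_dc)

lemma okL_map: "okL (mcod h) Xs \<Longrightarrow> okL (mdom h) (map (\<lambda>X. h ;; X) Xs)"
  by (induction Xs) auto

lemma sumL_nat: "okL (mcod h) Xs \<Longrightarrow> h ;; sumL (mcod h) Xs = sumL (mdom h) (map (\<lambda>X. h ;; X) Xs)"
proof (induction Xs)
  case Nil then show ?case by (simp add: zeroC_nat)
next
  case (Cons X Xs)
  then show ?case by (simp add: plusC_nat sumL_dc)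
qed

lemma prodL_nat: "okL (mcod h) Xs \<Longrightarrow> h ;; prodL (mcod h) Xs = prodL (mdom h) (map (\<lambda>X. h ;; X) Xs)"
proof (induction Xs)
  case Nil then show ?case by (simp add: oneC_nat)
next
  case (Cons X Xs)
  then show ?case by (simp add: mulC_nat prodL_dc)
qed

section \<open>Realising polynomials\<close>

definition vlist :: "(nat \<Rightarrow>\<^sub>0 nat) \<Rightarrow> nat list" where
  "vlist m = concat (map (\<lambda>i. replicate (Poly_Mapping.lookup m i) i) (sorted_list_of_set (Poly_Mapping.keys m)))"

definition T :: "nat \<Rightarrow> (nat \<Rightarrow> mor) \<Rightarrow> mpoly \<Rightarrow> mor" where
  "T n \<rho> q = sumL n (map (\<lambda>m. prodL n (map \<rho> (vlist m))) (sorted_list_of_set (Poly_Mapping.keys q)))"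

lemma set_vlist: "set (vlist m) \<subseteq> Poly_Mapping.keys m"
  by (auto simp: vlist_def)

lemma vlist_vars: "m \<in> Poly_Mapping.keys q \<Longrightarrow> set (vlist m) \<subseteq> vars q"
  using set_vlist by (auto simp: vars_def)

definition okR :: "nat \<Rightarrow> (nat \<Rightarrow> mor) \<Rightarrow> mpoly \<Rightarrow> bool" where
  "okR n \<rho> q \<longleftrightarrow> (\<forall>i\<in>vars q. mdom (\<rho> i) = n \<and> mcod (\<rho> i) = Suc 0)"

lemma okR_okL: "okR n \<rho> q \<Longrightarrow> m \<in> Poly_Mapping.keys q \<Longrightarrow> okL n (map \<rho> (vlist m))"
  using vlist_vars[of m q] by (auto simp: okR_def okL_def)

lemma okR_T_okL: "okR n \<rho> q \<Longrightarrow> okL n (map (\<lambda>m. prodL n (map \<rho> (vlist m))) (sorted_list_of_set (Poly_Mapping.keys q)))"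
  using okR_okL prodL_dc by (auto simp: okL_def)

lemma T_dc: "okR n \<rho> q \<Longrightarrow> mdom (T n \<rho> q) = n \<and> mcod (T n \<rho> q) = Suc 0"
  unfolding T_def by (rule sumL_dc[OF okR_T_okL])

lemma prod_list_vlist: "prod_list (map g (vlist m)) = (\<Prod>i\<in>Poly_Mapping.keys m. g i ^ Poly_Mapping.lookup m i)"
proof -
  have "prod_list (map g (concat (map (\<lambda>i. replicate (k i) i) L))) = prod_list (map (\<lambda>i. g i ^ k i) L)"
    for k :: "nat \<Rightarrow> nat" and L
    by (induction L) (simp_all add: prod_list_replicate)
  then show ?thesis
    by (simp add: vlist_def prod_list_distinct)
qed

lemma cls_T:
  assumes "okR n \<rho> q"
  shows "abs_R (T n \<rho> q) = ev (\<lambda>i. abs_R (\<rho> i)) q"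
proof -
  have "abs_R (T n \<rho> q) = sum_list (map abs_R (map (\<lambda>m. prodL n (map \<rho> (vlist m))) (sorted_list_of_set (Poly_Mapping.keys q))))"
    unfolding T_def by (rule cls_sumL[OF okR_T_okL[OF assms]])
  also have "\<dots> = (\<Sum>m\<in>Poly_Mapping.keys q. abs_R (prodL n (map \<rho> (vlist m))))"
    by (simp add: sum_list_distinct_conv_sum_set o_def)
  also have "\<dots> = (\<Sum>m\<in>Poly_Mapping.keys q. of_bit (Poly_Mapping.lookup q m) * mon (\<lambda>i. abs_R (\<rho> i)) m)"
  proof (rule sum.cong[OF HOL.refl])
    fix m assume m: "m \<in> Poly_Mapping.keys q"
    then have "Poly_Mapping.lookup q m = 1" by (simp add: in_keys_iff)
    then show "abs_R (prodL n (map \<rho> (vlist m))) = of_bit (Poly_Mapping.lookup q m) * mon (\<lambda>i. abs_R (\<rho> i)) m"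
      using cls_prodL[OF okR_okL[OF assms m]] by (simp add: prod_list_vlist mon_def o_def)
  qed
  finally show ?thesis by (simp add: ev_def)
qed

lemma T_nat:
  assumes "okR (mcod h) \<rho> q"
  shows "h ;; T (mcod h) \<rho> q = T (mdom h) (\<lambda>i. h ;; \<rho> i) q"
proof -
  have "h ;; T (mcod h) \<rho> q = sumL (mdom h) (map (\<lambda>X. h ;; X) (map (\<lambda>m. prodL (mcod h) (map \<rho> (vlist m))) (sorted_list_of_set (Poly_Mapping.keys q))))"
    unfolding T_def by (rule sumL_nat[OF okR_T_okL[OF assms]])
  also have "map (\<lambda>X. h ;; X) (map (\<lambda>m. prodL (mcod h) (map \<rho> (vlist m))) (sorted_list_of_set (Poly_Mapping.keys q)))
      = map (\<lambda>m. prodL (mdom h) (map (\<lambda>i. h ;; \<rho> i) (vlist m))) (sorted_list_of_set (Poly_Mapping.keys q))"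
  proof -
    have "h ;; prodL (mcod h) (map \<rho> (vlist m)) = prodL (mdom h) (map (\<lambda>i. h ;; \<rho> i) (vlist m))"
      if "m \<in> Poly_Mapping.keys q" for m
      using prodL_nat[OF okR_okL[OF assms that]] by (simp add: o_def)
    then show ?thesis by simp
  qed
  finally show ?thesis by (simp add: T_def)
qed


lemma am_dom: "wt f \<Longrightarrow> mdom (abs_mor f) = dom f"
  by (simp add: mdom.abs_eq eqA.refl)
lemma am_cod: "wt f \<Longrightarrow> mcod (abs_mor f) = cod f"
  by (simp add: mcod.abs_eq eqA.refl)
lemma am_comp: "wt f \<Longrightarrow> wt g \<Longrightarrow> cod f = dom g \<Longrightarrow> abs_mor (Comp f g) = abs_mor f ;; abs_mor g"
  by (simp add: mcomp.abs_eq eqA.refl)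
lemma am_tens: "wt f \<Longrightarrow> wt g \<Longrightarrow> abs_mor (Tensor f g) = abs_mor f \<otimes> abs_mor g"
  by (simp add: mtens.abs_eq eqA.refl)
lemma am_id: "abs_mor (Id n) = mid n"
  by (simp add: mid.abs_eq)
lemma am_sw: "abs_mor (Sw a b) = msw a b"
  by (simp add: msw.abs_eq)
lemma am_gen: "abs_mor (G x) = mgen x"
  by (simp add: mgen.abs_eq)

definition Xv :: "nat \<Rightarrow> R" where "Xv i = abs_R (proj (Suc i) i)"

definition nf :: "nat \<Rightarrow> mpoly \<Rightarrow> mor" where "nf n q = T n (proj n) q"

lemma cls_proj: "i < n \<Longrightarrow> abs_R (proj n i) = Xv i"
proof -
  assume i: "i < n"
  have "proj n i = proj (Suc i + (n - Suc i)) i" using i by simp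
  also have "\<dots> = proj (Suc i) i \<otimes> mdisc (n - Suc i)" by (rule proj_split1) simp
  also have "\<dots> = pad n (proj (Suc i) i)"
    using i tens_disc_r[of "proj (Suc i) i" "n - Suc i"] by (simp add: pad_def wk_def)
  finally show ?thesis using i by (simp add: cls_pad Xv_def)
qed

lemma okR_proj: "vars q \<subseteq> {..<n} \<Longrightarrow> okR n (proj n) q"
  by (auto simp: okR_def)

lemma nf_dc: "vars q \<subseteq> {..<n} \<Longrightarrow> mdom (nf n q) = n \<and> mcod (nf n q) = Suc 0"
  unfolding nf_def by (rule T_dc[OF okR_proj])

lemma cls_nf: "vars q \<subseteq> {..<n} \<Longrightarrow> abs_R (nf n q) = ev Xv q"
  unfolding nf_def
  by (simp add: cls_T okR_proj) (rule ev_cong, auto simp: cls_proj)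

lemma copy_proj0: "mgen Copy ;; proj 2 0 = mid (Suc 0)"
  by (simp add: proj_def mdisc_simps numeral_2_eq_2 copy_counit_r1)
lemma copy_proj1: "mgen Copy ;; proj 2 1 = mid (Suc 0)"
  by (simp add: proj_def mdisc_simps numeral_2_eq_2 copy_counit_l1)
lemma proj10: "proj (Suc 0) 0 = mid (Suc 0)"
  by (simp add: proj_def mdisc_simps)

lemma pr_proj_id2 [simplified]: "pr 2 (proj 2 0) (proj 2 1) = mid 2"
proof -
  have "mid 2 = Tup 2 (map (proj 2) [0..<2])" by (rule Id_Tup)
  also have "\<dots> = pr 2 (proj 2 0) (pr 2 (proj 2 1) (mdisc 2))"
    by (simp add: numeral_2_eq_2)
  also have "pr 2 (proj 2 1) (mdisc 2) = proj 2 1" by (rule pr_disc_right) simp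
  finally show ?thesis by simp
qed

lemma plusC_proj [simplified]: "plusC 2 (proj 2 0) (proj 2 1) = mgen Add"
  by (simp add: plusC_def pr_proj_id2)
lemma mulC_proj [simplified]: "mulC 2 (proj 2 0) (proj 2 1) = mgen And"
  by (simp add: mulC_def pr_proj_id2)

lemma main_lemma: "wt f \<Longrightarrow> j < cod f \<Longrightarrow> abs_R (abs_mor f ;; proj (cod f) j) = ev Xv (interp f ! j)"
proof (induction f arbitrary: j)
  case (G x)
  show ?case
  proof (cases x)
    case Discard then show ?thesis using G by simp
  next
    case Copy
    then have "j = 0 \<or> j = 1" using G by auto
    then show ?thesis
    proof
      assume "j = 0" then show ?thesis using Copy
        by (simp add: am_gen copy_proj0 Xv_def proj10)
    next
      assume "j = 1" then show ?thesis using Copy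
        by (simp add: am_gen copy_proj1[simplified] Xv_def proj10)
    qed
  next
    case Zero then show ?thesis using G by (simp add: am_gen proj10 zero_R.abs_eq)
  next
    case One then show ?thesis using G by (simp add: am_gen proj10 one_R.abs_eq)
  next
    case Add
    have "abs_R (mgen Add) = abs_R (plusC 2 (proj 2 0) (proj 2 1))" by (simp add: plusC_proj)
    also have "\<dots> = abs_R (proj 2 0) + abs_R (proj 2 1)" by (rule cls_plusC) simp_all
    also have "\<dots> = Xv 0 + Xv 1" by (simp add: cls_proj)
    finally show ?thesis using Add G by (simp add: am_gen proj10 ev_add)
  next
    case And
    have "abs_R (mgen And) = abs_R (mulC 2 (proj 2 0) (proj 2 1))" by (simp add: mulC_proj)
    also have "\<dots> = abs_R (proj 2 0) * abs_R (proj 2 1)" by (rule cls_mulC) simp_all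
    also have "\<dots> = Xv 0 * Xv 1" by (simp add: cls_proj)
    finally show ?thesis using And G by (simp add: am_gen proj10 ev_mult)
  qed
next
  case (Id n)
  then show ?case by (simp add: am_id cls_proj)
next
  case (Sw a b)
  show ?case
  proof (cases "j < b")
    case True
    have "msw a b ;; proj (b + a) j = proj (a + b) (a + j)" using True by (rule sw_proj1)
    then show ?thesis using True by (simp add: am_sw cls_proj nth_append)
  next
    case False
    then obtain i where i: "j = b + i" "i < a" using Sw by (metis add_diff_inverse_nat add_less_cancel_left cod.simps(3))
    have "msw a b ;; proj (b + a) (b + i) = proj (a + b) i" using i by (intro sw_proj2)
    then show ?thesis using i by (simp add: am_sw cls_proj nth_append)
  qed
next
  case (Comp f g)
  have wf: "wt f" and wg: "wt g" and fg: "cod f = dom g" using Comp.prems by auto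
  have j: "j < cod g" using Comp.prems by simp
  let ?F = "abs_mor f" and ?G = "abs_mor g" and ?q = "interp g ! j" and ?b = "cod f"
  have lg: "length (interp g) = cod g" using wg length_interp by auto
  have qin: "?q \<in> set (interp g)" using j lg by simp
  have vq: "vars ?q \<subseteq> {..<?b}" using vars_interp[OF wg qin] fg by simp
  have Geq: "?G ;; proj (cod g) j = nf ?b ?q"
  proof (rule cls_eq)
    show "mcod (?G ;; proj (cod g) j) = Suc 0" using wg j by (simp add: am_dom am_cod)
    show "mcod (nf ?b ?q) = Suc 0" using nf_dc[OF vq] by simp
    show "mdom (?G ;; proj (cod g) j) = mdom (nf ?b ?q)" using wg j nf_dc[OF vq] fg by (simp add: am_dom am_cod)
    show "abs_R (?G ;; proj (cod g) j) = abs_R (nf ?b ?q)"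
      using Comp.IH(2)[OF wg j] cls_nf[OF vq] by simp
  qed
  have okF: "okR (mcod ?F) (proj ?b) ?q" using okR_proj[OF vq] wf by (simp add: am_cod)
  have "abs_mor (Comp f g) ;; proj (cod (Comp f g)) j = ?F ;; (?G ;; proj (cod g) j)"
    using wf wg fg j by (simp add: am_comp m_comp_assoc am_dom am_cod)
  also have "\<dots> = ?F ;; T (mcod ?F) (proj ?b) ?q" unfolding Geq nf_def using wf by (simp add: am_cod)
  also have "\<dots> = T (mdom ?F) (\<lambda>i. ?F ;; proj ?b i) ?q" by (rule T_nat[OF okF])
  finally have e: "abs_mor (Comp f g) ;; proj (cod (Comp f g)) j = T (mdom ?F) (\<lambda>i. ?F ;; proj ?b i) ?q" .
  have okT: "okR (mdom ?F) (\<lambda>i. ?F ;; proj ?b i) ?q"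
    using vq wf by (auto simp: okR_def am_dom am_cod)
  have "abs_R (T (mdom ?F) (\<lambda>i. ?F ;; proj ?b i) ?q) = ev (\<lambda>i. abs_R (?F ;; proj ?b i)) ?q"
    by (rule cls_T[OF okT])
  also have "\<dots> = ev (\<lambda>i. ev Xv (interp f ! i)) ?q"
  proof (rule ev_cong)
    fix i assume "i \<in> vars ?q"
    then have "i < cod f" using vq by auto
    then show "abs_R (?F ;; proj ?b i) = ev Xv (interp f ! i)" using Comp.IH(1)[OF wf] by simp
  qed
  also have "\<dots> = ev Xv (ev (\<lambda>i. interp f ! i) ?q)" by (simp add: ev_ev)
  also have "\<dots> = ev Xv (interp (Comp f g) ! j)" using j lg by simp
  finally show ?case using e by simp
next
  case (Tensor f g)
  have wf: "wt f" and wg: "wt g" using Tensor.prems by auto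
  let ?F = "abs_mor f" and ?G = "abs_mor g" and ?p = "cod f" and ?r = "cod g"
  let ?a = "dom f" and ?c = "dom g"
  have lf: "length (interp f) = cod f" using wf length_interp by auto
  have lg: "length (interp g) = cod g" using wg length_interp by auto
  have j: "j < ?p + ?r" using Tensor.prems by simp
  show ?case
  proof (cases "j < ?p")
    case True
    have "abs_mor (Tensor f g) ;; proj (cod (Tensor f g)) j = (?F \<otimes> ?G) ;; (proj ?p j \<otimes> mdisc ?r)"
      using wf wg True by (simp add: am_tens proj_split1)
    also have "\<dots> = (?F ;; proj ?p j) \<otimes> (?G ;; mdisc ?r)"
      using wf wg True by (simp add: m_interchange am_dom am_cod)
    also have "?G ;; mdisc ?r = mdisc ?c"
      using m_discard_natural[of ?G] wg by (simp add: am_dom am_cod)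
    also have "(?F ;; proj ?p j) \<otimes> mdisc ?c = pad (?a + ?c) (?F ;; proj ?p j)"
      using tens_disc_r[of "?F ;; proj ?p j" ?c] wf True by (simp add: pad_def wk_def am_dom am_cod)
    finally have e: "abs_mor (Tensor f g) ;; proj (cod (Tensor f g)) j = pad (?a + ?c) (?F ;; proj ?p j)" .
    have "abs_R (pad (?a + ?c) (?F ;; proj ?p j)) = abs_R (?F ;; proj ?p j)"
      using wf True by (intro cls_pad) (simp_all add: am_dom am_cod)
    also have "\<dots> = ev Xv (interp f ! j)" using Tensor.IH(1)[OF wf True] .
    also have "\<dots> = ev Xv (interp (Tensor f g) ! j)" using True lf by (simp add: nth_append)
    finally show ?thesis using e by simp
  next
    case False
    then obtain i where i: "j = ?p + i" "i < ?r" using j by (metis add_diff_inverse_nat add_less_cancel_left)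
    let ?Q = "interp g ! i"
    have qin: "?Q \<in> set (interp g)" using i lg by simp
    have vq: "vars ?Q \<subseteq> {..<?c}" using vars_interp[OF wg qin] by simp
    have Geq: "?G ;; proj ?r i = nf ?c ?Q"
    proof (rule cls_eq)
      show "mcod (?G ;; proj ?r i) = Suc 0" using wg i by (simp add: am_dom am_cod)
      show "mcod (nf ?c ?Q) = Suc 0" using nf_dc[OF vq] by simp
      show "mdom (?G ;; proj ?r i) = mdom (nf ?c ?Q)" using wg i nf_dc[OF vq] by (simp add: am_dom am_cod)
      show "abs_R (?G ;; proj ?r i) = abs_R (nf ?c ?Q)"
        using Tensor.IH(2)[OF wg i(2)] cls_nf[OF vq] by simp
    qed
    let ?h = "mdisc ?a \<otimes> mid ?c"
    have "abs_mor (Tensor f g) ;; proj (cod (Tensor f g)) j = (?F \<otimes> ?G) ;; (mdisc ?p \<otimes> proj ?r i)"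
      using wf wg i by (simp add: am_tens proj_split2)
    also have "\<dots> = (?F ;; mdisc ?p) \<otimes> (?G ;; proj ?r i)"
      using wf wg i by (simp add: m_interchange am_dom am_cod)
    also have "?F ;; mdisc ?p = mdisc ?a"
      using m_discard_natural[of ?F] wf by (simp add: am_dom am_cod)
    also have "mdisc ?a \<otimes> (?G ;; proj ?r i) = ?h ;; nf ?c ?Q"
      unfolding Geq using tens_disc_l[of ?a "nf ?c ?Q"] nf_dc[OF vq] by simp
    also have "\<dots> = T (mdom ?h) (\<lambda>k. ?h ;; proj ?c k) ?Q"
      unfolding nf_def using T_nat[of ?h "proj ?c" ?Q] okR_proj[OF vq] by simp
    finally have e: "abs_mor (Tensor f g) ;; proj (cod (Tensor f g)) j = T (mdom ?h) (\<lambda>k. ?h ;; proj ?c k) ?Q" .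
    have hp: "?h ;; proj ?c k = proj (?a + ?c) (?a + k)" if "k < ?c" for k
    proof -
      have "?h ;; proj ?c k = mdisc ?a \<otimes> proj ?c k" using tens_disc_l[of ?a "proj ?c k"] that by simp
      also have "\<dots> = proj (?a + ?c) (?a + k)" by (simp add: proj_split2)
      finally show ?thesis .
    qed
    have okT: "okR (mdom ?h) (\<lambda>k. ?h ;; proj ?c k) ?Q" using vq by (auto simp: okR_def)
    have "abs_R (T (mdom ?h) (\<lambda>k. ?h ;; proj ?c k) ?Q) = ev (\<lambda>k. abs_R (?h ;; proj ?c k)) ?Q"
      by (rule cls_T[OF okT])
    also have "\<dots> = ev (\<lambda>k. ev Xv (PVar (k + ?a))) ?Q"
    proof (rule ev_cong)
      fix k assume "k \<in> vars ?Q"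
      then have "k < ?c" using vq by auto
      then show "abs_R (?h ;; proj ?c k) = ev Xv (PVar (k + ?a))" by (simp add: hp cls_proj add.commute)
    qed
    also have "\<dots> = ev Xv (ev (\<lambda>k. PVar (k + ?a)) ?Q)" by (simp add: ev_ev)
    also have "\<dots> = ev Xv (interp (Tensor f g) ! j)" using i lf lg by (simp add: nth_append)
    finally show ?thesis using e by simp
  qed
qed

theorem mainTheorem2:
  fixes f g :: circ and a b :: nat
  assumes "wt f" and "wt g"
    and "dom f = a" and "cod f = b" and "dom g = a" and "cod g = b"
  shows "interp f = interp g \<longleftrightarrow> eqA f g"
proof
  assume eqA: "eqA f g"
  then show "interp f = interp g" by (rule soundness)
next
  assume I: "interp f = interp g"
  have "abs_mor f = abs_mor g"
  proof (rule ext_mor[where N = a and M = b])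
    fix j assume j: "j < b"
    show "abs_mor f ;; proj b j = abs_mor g ;; proj b j"
    proof (rule cls_eq)
      show "abs_R (abs_mor f ;; proj b j) = abs_R (abs_mor g ;; proj b j)"
        using main_lemma[of f j] main_lemma[of g j] assms j I by simp
    qed (use assms j in \<open>simp_all add: am_dom am_cod\<close>)
  qed (use assms in \<open>simp_all add: am_dom am_cod\<close>)
  then show "eqA f g"
    using Quotient_rel[OF Quotient_mor] assms eqA.refl by blast
qed


end
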